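(* Let $r>2$, $\alpha=2^r-1$, $\beta=2^{r-1}(2^r-1)$, let $\mathcal{C}\subseteq\mathbb{Z}_2^\alpha\times\mathbb{Z}_4^\beta$ be a $\mathbb{Z}_2\mathbb{Z}_4$-additive 1-perfect code and $D=\mathcal{C}^\perp$, and suppose $D$ is $\mathbb{Z}_2\mathbb{Z}_4$-cyclic. Let $\mathbf{z}=(x_1,\dots,x_\alpha\mid y^{(1)},\dots,y^{(2^{r-1})})\in D$ be a codeword of order 4, where each $y^{(k)}\in\mathbb{Z}_4^\alpha$ is the $k$th consecutive block of $\alpha$ quaternary coordinates, and put $\eta_k(y)=|\{\ell:1\le\ell\le\alpha,\ y^{(k)}_\ell=2\}|$. Then $\eta_1(y),\dots,\eta_{2^{r-1}}(y)$ all have the same parity.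
   Context: A $\mathbb{Z}_2\mathbb{Z}_4$-additive code is an additive subgroup of $\mathbb{Z}_2^\alpha\times\mathbb{Z}_4^\beta$; vectors are $(u\mid u')$ with $u\in\mathbb{Z}_2^\alpha$, $u'\in\mathbb{Z}_4^\beta$. A codeword $\mathbf{z}$ has order 4 if $2\mathbf{z}\ne 0$. The Gray map $\phi:\mathbb{Z}_4\to\mathbb{Z}_2^2$ is $0\mapsto(0,0),1\mapsto(0,1),2\mapsto(1,1),3\mapsto(1,0)$, $\Phi(u\mid u')=(u\mid\phi(u'_1),\dots,\phi(u'_\beta))$. A binary code $C\subseteq\mathbb{Z}_2^n$ is 1-perfect if the Hamming balls of radius 1 around its codewords partition $\mathbb{Z}_2^n$; a $\mathbb{Z}_2\mathbb{Z}_4$-additive code is 1-perfect if its Gray image is. The dual is $\mathcal{C}^\perp=\{\mathbf{v}:\mathbf{u}\cdot\mathbf{v}=0\ \forall\mathbf{u}\in\mathcal{C}\}$ with $\mathbf{u}\cdot\mathbf{v}=2\sum_{i=1}^\alpha u_iv_i+\sum_{j=1}^\beta u'_jv'_j\in\mathbb{Z}_4$. With $\sigma(v_1,\dots,v_m)=(v_m,v_1,\dots,v_{m-1})$ and $\sigma(u\mid u')=(\sigma(u)\mid\sigma(u'))$, a code is $\mathbb{Z}_2\mathbb{Z}_4$-cyclic if closed under $\sigma$. *)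

theory Defs
  imports Main
begin

text \<open>Z2Z4 vectors (u | u') are pairs of integer lists; entries of u lie in {0,1}
  (representing Z2), entries of u' lie in {0,1,2,3} (representing Z4).\<close>

type_synonym z2z4vec = "int list \<times> int list"

definition z2z4_space :: "nat \<Rightarrow> nat \<Rightarrow> z2z4vec set" where
  "z2z4_space \<alpha> \<beta> = {(u, u'). length u = \<alpha> \<and> length u' = \<beta> \<and>
      set u \<subseteq> {0, 1} \<and> set u' \<subseteq> {0, 1, 2, 3}}"

definition z2z4_zero :: "nat \<Rightarrow> nat \<Rightarrow> z2z4vec" where
  "z2z4_zero \<alpha> \<beta> = (replicate \<alpha> 0, replicate \<beta> 0)"

definition z2z4_add :: "z2z4vec \<Rightarrow> z2z4vec \<Rightarrow> z2z4vec" where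
  "z2z4_add x y = (map2 (\<lambda>a b. (a + b) mod 2) (fst x) (fst y),
                   map2 (\<lambda>a b. (a + b) mod 4) (snd x) (snd y))"

definition z2z4_neg :: "z2z4vec \<Rightarrow> z2z4vec" where
  "z2z4_neg x = (map (\<lambda>a. (- a) mod 2) (fst x), map (\<lambda>a. (- a) mod 4) (snd x))"

definition z2z4_additive :: "nat \<Rightarrow> nat \<Rightarrow> z2z4vec set \<Rightarrow> bool" where
  "z2z4_additive \<alpha> \<beta> C \<longleftrightarrow> C \<subseteq> z2z4_space \<alpha> \<beta> \<and> z2z4_zero \<alpha> \<beta> \<in> C \<and>
     (\<forall>x\<in>C. \<forall>y\<in>C. z2z4_add x y \<in> C) \<and> (\<forall>x\<in>C. z2z4_neg x \<in> C)"

definition z2z4_inner :: "z2z4vec \<Rightarrow> z2z4vec \<Rightarrow> int" where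
  "z2z4_inner x y = (2 * (\<Sum>i<length (fst x). fst x ! i * fst y ! i)
                     + (\<Sum>j<length (snd x). snd x ! j * snd y ! j)) mod 4"

definition z2z4_dual :: "nat \<Rightarrow> nat \<Rightarrow> z2z4vec set \<Rightarrow> z2z4vec set" where
  "z2z4_dual \<alpha> \<beta> C = {v \<in> z2z4_space \<alpha> \<beta>. \<forall>u\<in>C. z2z4_inner u v = 0}"

definition gray :: "int \<Rightarrow> bool list" where
  "gray a = (if a = 0 then [False, False] else if a = 1 then [False, True]
             else if a = 2 then [True, True] else [True, False])"

definition Gray :: "z2z4vec \<Rightarrow> bool list" where
  "Gray x = map (\<lambda>a. a = 1) (fst x) @ concat (map gray (snd x))"

definition hamming :: "bool list \<Rightarrow> bool list \<Rightarrow> nat" where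
  "hamming x y = card {i. i < length x \<and> x ! i \<noteq> y ! i}"

definition perfect1 :: "nat \<Rightarrow> bool list set \<Rightarrow> bool" where
  "perfect1 n C \<longleftrightarrow> (\<forall>c\<in>C. length c = n) \<and>
     (\<forall>x. length x = n \<longrightarrow> (\<exists>!c. c \<in> C \<and> hamming x c \<le> 1))"

definition z2z4_perfect1 :: "nat \<Rightarrow> nat \<Rightarrow> z2z4vec set \<Rightarrow> bool" where
  "z2z4_perfect1 \<alpha> \<beta> C \<longleftrightarrow> perfect1 (\<alpha> + 2 * \<beta>) (Gray ` C)"

definition rshift :: "'a list \<Rightarrow> 'a list" where
  "rshift xs = (if xs = [] then [] else last xs # butlast xs)"

definition z2z4_sigma :: "z2z4vec \<Rightarrow> z2z4vec" where
  "z2z4_sigma x = (rshift (fst x), rshift (snd x))"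

definition z2z4_cyclic :: "z2z4vec set \<Rightarrow> bool" where
  "z2z4_cyclic C \<longleftrightarrow> (\<forall>x\<in>C. z2z4_sigma x \<in> C)"

definition z2z4_order4 :: "nat \<Rightarrow> nat \<Rightarrow> z2z4vec \<Rightarrow> bool" where
  "z2z4_order4 \<alpha> \<beta> z \<longleftrightarrow> z2z4_add z z \<noteq> z2z4_zero \<alpha> \<beta>"

text \<open>eta_k for 0-based block index k: number of entries equal to 2 in the k-th
  consecutive block of alpha quaternary coordinates.\<close>
definition eta :: "nat \<Rightarrow> z2z4vec \<Rightarrow> nat \<Rightarrow> nat" where
  "eta \<alpha> z k = card {l. l < \<alpha> \<and> snd z ! (k * \<alpha> + l) = 2}"

end

theory Submission
  imports Defs Complex_Main
begin


lemma space_iff: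
  "v \<in> z2z4_space a b \<longleftrightarrow> length (fst v) = a \<and> length (snd v) = b \<and>
     (\<forall>i<a. fst v ! i \<in> {0,1}) \<and> (\<forall>j<b. snd v ! j \<in> {0,1,2,3})"
  by (cases v) (auto simp: z2z4_space_def in_set_conv_nth subset_iff)

lemma modsum_cong:
  fixes f g :: "nat \<Rightarrow> int"
  assumes "\<And>i. i \<in> A \<Longrightarrow> f i mod m = g i mod m"
  shows "(\<Sum>i\<in>A. f i) mod m = (\<Sum>i\<in>A. g i) mod m"
proof -
  have "(\<Sum>i\<in>A. f i mod m) = (\<Sum>i\<in>A. g i mod m)" using assms by (intro sum.cong) auto
  then show ?thesis by (metis mod_sum_eq)
qed

lemma inner_space:
  assumes "x \<in> z2z4_space a b"
  shows "z2z4_inner x w = ((\<Sum>i<a. 2 * (fst x ! i * fst w ! i)) + (\<Sum>j<b. snd x ! j * snd w ! j)) mod 4"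
  using assms by (simp add: z2z4_inner_def space_iff sum_distrib_left)

lemma add_space:
  assumes "x \<in> z2z4_space a b" "y \<in> z2z4_space a b"
  shows "z2z4_add x y \<in> z2z4_space a b"
    and "\<And>i. i < a \<Longrightarrow> fst (z2z4_add x y) ! i = (fst x ! i + fst y ! i) mod 2"
    and "\<And>j. j < b \<Longrightarrow> snd (z2z4_add x y) ! j = (snd x ! j + snd y ! j) mod 4"
  using assms by (auto simp: space_iff z2z4_add_def)

lemma neg_space:
  assumes "x \<in> z2z4_space a b"
  shows "z2z4_neg x \<in> z2z4_space a b"
    and "\<And>i. i < a \<Longrightarrow> fst (z2z4_neg x) ! i = (- fst x ! i) mod 2"
    and "\<And>j. j < b \<Longrightarrow> snd (z2z4_neg x) ! j = (- snd x ! j) mod 4"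
  using assms by (auto simp: space_iff z2z4_neg_def)

lemma zero_space: "z2z4_zero a b \<in> z2z4_space a b"
  "i < a \<Longrightarrow> fst (z2z4_zero a b) ! i = 0" "j < b \<Longrightarrow> snd (z2z4_zero a b) ! j = 0"
  by (auto simp: space_iff z2z4_zero_def)

lemma space_eqI:
  assumes "x \<in> z2z4_space a b" "y \<in> z2z4_space a b"
    "\<And>i. i < a \<Longrightarrow> fst x ! i = fst y ! i" "\<And>j. j < b \<Longrightarrow> snd x ! j = snd y ! j"
  shows "x = y"
  using assms by (cases x; cases y) (auto simp: space_iff intro!: nth_equalityI)

lemma mod4_swap: "(((a::int)+b) mod 4 + (c+d) mod 4) mod 4 = ((a+c) mod 4 + (b+d) mod 4) mod 4"
proof -
  have "(((a::int)+b) mod 4 + (c+d) mod 4) mod 4 = (a+b+(c+d)) mod 4" by (simp add: mod_add_eq)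
  moreover have "((a+c) mod 4 + (b+d) mod 4) mod 4 = (a+c+(b+d)) mod 4" by (simp add: mod_add_eq)
  ultimately show ?thesis by (simp add: ac_simps)
qed

lemma two_mod2: "2 * (((a::int)+b) mod 2 * c) mod 4 = (2*(a*c) + 2*(b*c)) mod 4"
proof -
  have "(a+b) div 2 * 2 + (a+b) mod 2 = a+b" by simp
  then have "2*c*((a+b) div 2 * 2 + (a+b) mod 2) = 2*c*(a+b)" by simp
  moreover have "\<And>q m::int. 2*c*(q*2 + m) = 2*(m*c) + 4*(q*c)" by (simp add: algebra_simps)
  moreover have "2*c*(a+b) = 2*(a*c)+2*(b*c)" by (simp add: algebra_simps)
  ultimately have h: "2 * (((a+b) mod 2) * c) + 4*(((a+b) div 2)*c) = 2*(a*c)+2*(b*c)" by metis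
  have "(2 * (((a+b) mod 2) * c) + 4*(((a+b) div 2)*c)) mod 4 = 2 * (((a+b) mod 2) * c) mod 4" by simp
  then show ?thesis using h by simp
qed

lemma inner_add_left:
  assumes "x \<in> z2z4_space a b" "y \<in> z2z4_space a b" "w \<in> z2z4_space a b"
  shows "z2z4_inner (z2z4_add x y) w = (z2z4_inner x w + z2z4_inner y w) mod 4"
proof -
  have s: "z2z4_add x y \<in> z2z4_space a b" using add_space assms by blast
  have "z2z4_inner (z2z4_add x y) w = ((\<Sum>i<a. 2 * (fst (z2z4_add x y) ! i * fst w ! i)) + (\<Sum>j<b. snd (z2z4_add x y) ! j * snd w ! j)) mod 4"
    using inner_space[OF s] .
  also have "\<dots> = ((\<Sum>i<a. 2 * (fst (z2z4_add x y) ! i * fst w ! i)) mod 4 + (\<Sum>j<b. snd (z2z4_add x y) ! j * snd w ! j) mod 4) mod 4"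
    by (simp add: mod_add_eq)
  also have "(\<Sum>i<a. 2 * (fst (z2z4_add x y) ! i * fst w ! i)) mod 4 = (\<Sum>i<a. 2 * (fst x ! i * fst w ! i) + 2 * (fst y ! i * fst w ! i)) mod 4"
  proof (rule modsum_cong)
    fix i assume "i \<in> {..<a}"
    then have e: "fst (z2z4_add x y) ! i = (fst x ! i + fst y ! i) mod 2" using add_space(2)[OF assms(1,2)] by auto
    show "2 * (fst (z2z4_add x y) ! i * fst w ! i) mod 4 = (2 * (fst x ! i * fst w ! i) + 2 * (fst y ! i * fst w ! i)) mod 4"
      unfolding e by (rule two_mod2)
  qed
  also have "(\<Sum>j<b. snd (z2z4_add x y) ! j * snd w ! j) mod 4 = (\<Sum>j<b. snd x ! j * snd w ! j + snd y ! j * snd w ! j) mod 4"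
  proof (rule modsum_cong)
    fix j assume "j \<in> {..<b}"
    then have e: "snd (z2z4_add x y) ! j = (snd x ! j + snd y ! j) mod 4" using add_space(3)[OF assms(1,2)] by auto
    show "snd (z2z4_add x y) ! j * snd w ! j mod 4 = (snd x ! j * snd w ! j + snd y ! j * snd w ! j) mod 4"
      unfolding e by (simp add: mod_mult_left_eq distrib_right)
  qed
  finally show ?thesis
    using inner_space[OF assms(1), of w] inner_space[OF assms(2), of w]
    by (simp add: sum.distrib mod4_swap)
qed


lemma inner_range: "0 \<le> z2z4_inner x y" "z2z4_inner x y < 4" "z2z4_inner x y mod 4 = z2z4_inner x y"
  by (auto simp: z2z4_inner_def)

lemma inner_sym:
  assumes "x \<in> z2z4_space a b" "y \<in> z2z4_space a b"
  shows "z2z4_inner x y = z2z4_inner y x"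
  using inner_space[OF assms(1), of y] inner_space[OF assms(2), of x] by (simp add: mult.commute)

lemma inner_add_right:
  assumes "x \<in> z2z4_space a b" "y \<in> z2z4_space a b" "w \<in> z2z4_space a b"
  shows "z2z4_inner w (z2z4_add x y) = (z2z4_inner w x + z2z4_inner w y) mod 4"
  using inner_add_left[OF assms] inner_sym assms add_space(1)[OF assms(1,2)] by metis

lemma inner_zero_left: "z2z4_inner (z2z4_zero a b) w = 0"
  by (simp add: z2z4_inner_def z2z4_zero_def)

lemma inner_zero_right: "w \<in> z2z4_space a b \<Longrightarrow> z2z4_inner w (z2z4_zero a b) = 0"
  using inner_sym[OF _ zero_space(1)] inner_zero_left by metis

lemma add_assoc:
  assumes "x \<in> z2z4_space a b" "y \<in> z2z4_space a b" "z \<in> z2z4_space a b"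
  shows "z2z4_add (z2z4_add x y) z = z2z4_add x (z2z4_add y z)"
proof (rule space_eqI)
  have xy: "z2z4_add x y \<in> z2z4_space a b" and yz: "z2z4_add y z \<in> z2z4_space a b"
    using add_space(1) assms by blast+
  show "z2z4_add (z2z4_add x y) z \<in> z2z4_space a b" "z2z4_add x (z2z4_add y z) \<in> z2z4_space a b"
    using add_space(1) assms xy yz by blast+
  fix i assume i: "i < a"
  have "fst (z2z4_add (z2z4_add x y) z) ! i = ((fst x!i + fst y!i) mod 2 + fst z!i) mod 2"
    using add_space(2)[OF xy assms(3) i] add_space(2)[OF assms(1,2) i] by simp
  moreover have "fst (z2z4_add x (z2z4_add y z)) ! i = (fst x!i + (fst y!i + fst z!i) mod 2) mod 2"
    using add_space(2)[OF assms(1) yz i] add_space(2)[OF assms(2,3) i] by simp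
  ultimately show "fst (z2z4_add (z2z4_add x y) z) ! i = fst (z2z4_add x (z2z4_add y z)) ! i"
    by (simp add: mod_add_left_eq mod_add_right_eq add.assoc)
next
  have xy: "z2z4_add x y \<in> z2z4_space a b" and yz: "z2z4_add y z \<in> z2z4_space a b"
    using add_space(1) assms by blast+
  fix i assume i: "i < b"
  have "snd (z2z4_add (z2z4_add x y) z) ! i = ((snd x!i + snd y!i) mod 4 + snd z!i) mod 4"
    using add_space(3)[OF xy assms(3) i] add_space(3)[OF assms(1,2) i] by simp
  moreover have "snd (z2z4_add x (z2z4_add y z)) ! i = (snd x!i + (snd y!i + snd z!i) mod 4) mod 4"
    using add_space(3)[OF assms(1) yz i] add_space(3)[OF assms(2,3) i] by simp
  ultimately show "snd (z2z4_add (z2z4_add x y) z) ! i = snd (z2z4_add x (z2z4_add y z)) ! i"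
    by (simp add: mod_add_left_eq mod_add_right_eq add.assoc)
qed

lemma add_comm:
  assumes "x \<in> z2z4_space a b" "y \<in> z2z4_space a b"
  shows "z2z4_add x y = z2z4_add y x"
proof (rule space_eqI)
  show "z2z4_add x y \<in> z2z4_space a b" "z2z4_add y x \<in> z2z4_space a b" using add_space(1) assms by blast+
  fix i assume i: "i < a" then show "fst (z2z4_add x y) ! i = fst (z2z4_add y x) ! i"
    using add_space(2)[OF assms(1,2) i] add_space(2)[OF assms(2,1) i] by (simp add: add.commute)
next
  fix i assume i: "i < b" then show "snd (z2z4_add x y) ! i = snd (z2z4_add y x) ! i"
    using add_space(3)[OF assms(1,2) i] add_space(3)[OF assms(2,1) i] by (simp add: add.commute)
qed

lemma add_zero:
  assumes "x \<in> z2z4_space a b"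
  shows "z2z4_add x (z2z4_zero a b) = x"
proof (rule space_eqI[OF add_space(1)[OF assms zero_space(1)] assms])
  fix i assume i: "i < a"
  then have "fst x ! i \<in> {0,1}" using assms by (auto simp: space_iff)
  then show "fst (z2z4_add x (z2z4_zero a b)) ! i = fst x ! i"
    using add_space(2)[OF assms zero_space(1) i] zero_space(2)[OF i] by auto
next
  fix j assume j: "j < b"
  then have "snd x ! j \<in> {0,1,2,3}" using assms by (auto simp: space_iff)
  then show "snd (z2z4_add x (z2z4_zero a b)) ! j = snd x ! j"
    using add_space(3)[OF assms zero_space(1) j] zero_space(3)[OF j] by auto
qed

lemma add_neg:
  assumes "x \<in> z2z4_space a b"
  shows "z2z4_add x (z2z4_neg x) = z2z4_zero a b"
proof (rule space_eqI[OF add_space(1)[OF assms neg_space(1)[OF assms]] zero_space(1)])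
  fix i assume i: "i < a"
  show "fst (z2z4_add x (z2z4_neg x)) ! i = fst (z2z4_zero a b) ! i"
    using add_space(2)[OF assms neg_space(1)[OF assms] i] neg_space(2)[OF assms i] zero_space(2)[OF i]
    by (simp add: mod_add_right_eq)
next
  fix j assume j: "j < b"
  show "snd (z2z4_add x (z2z4_neg x)) ! j = snd (z2z4_zero a b) ! j"
    using add_space(3)[OF assms neg_space(1)[OF assms] j] neg_space(3)[OF assms j] zero_space(3)[OF j]
    by (simp add: mod_add_right_eq)
qed

lemma add_cancel:
  assumes "x \<in> z2z4_space a b" "y \<in> z2z4_space a b" "h \<in> z2z4_space a b"
    and "z2z4_add x h = z2z4_add y h"
  shows "x = y"
proof -
  have nh: "z2z4_neg h \<in> z2z4_space a b" by (rule neg_space(1)[OF assms(3)])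
  have e: "z2z4_add (z2z4_add v h) (z2z4_neg h) = v" if v: "v \<in> z2z4_space a b" for v
  proof -
    have "z2z4_add (z2z4_add v h) (z2z4_neg h) = z2z4_add v (z2z4_add h (z2z4_neg h))"
      by (rule add_assoc[OF v assms(3) nh])
    also have "\<dots> = z2z4_add v (z2z4_zero a b)" by (simp only: add_neg[OF assms(3)])
    also have "\<dots> = v" by (rule add_zero[OF v])
    finally show ?thesis .
  qed
  show ?thesis using e[OF assms(1)] e[OF assms(2)] assms(4) by metis
qed

lemma finite_space: "finite (z2z4_space a b)"
proof -
  have "z2z4_space a b \<subseteq> {u. set u \<subseteq> {0,1} \<and> length u = a} \<times> {u. set u \<subseteq> {0,1,2,3} \<and> length u = b}"
    by (auto simp: z2z4_space_def)
  moreover have "finite ({u::int list. set u \<subseteq> {0,1} \<and> length u = a} \<times> {u. set u \<subseteq> {0,1,2,3} \<and> length u = b})"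
    by (intro finite_cartesian_product finite_lists_length_eq) auto
  ultimately show ?thesis by (rule finite_subset)
qed

definition chi :: "int \<Rightarrow> complex" where "chi k = \<i> powi k"

lemma chi_add: "chi (x + y) = chi x * chi y"
  by (simp add: chi_def power_int_add)

lemma chi_mod: "chi (k mod 4) = chi k"
proof -
  have "k = 4 * (k div 4) + k mod 4" by simp
  then have "chi k = chi (4 * (k div 4)) * chi (k mod 4)" by (metis chi_add)
  moreover have "chi (4 * (k div 4)) = 1"
    by (simp add: chi_def power_int_mult)
  ultimately show ?thesis by simp
qed

lemma chi_one_iff: "chi k = 1 \<longleftrightarrow> k mod 4 = 0"
proof -
  have e: "chi k = chi (k mod 4)" by (simp add: chi_mod)
  have v: "chi 1 = \<i>" "chi 2 = -1" "chi 3 = -\<i>" "chi 0 = 1"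
    by (simp_all add: chi_def power_int_def eval_nat_numeral)
  have "k mod 4 = 0 \<or> k mod 4 = 1 \<or> k mod 4 = 2 \<or> k mod 4 = 3" by auto
  then show ?thesis
  proof (elim disjE)
    assume h: "k mod 4 = 1" show ?thesis unfolding e h v by simp
  next
    assume h: "k mod 4 = 2" show ?thesis unfolding e h v by simp
  next
    assume h: "k mod 4 = 3" show ?thesis unfolding e h v by (simp add: complex_eq_iff)
  qed (simp add: e v)
qed

lemma char_sum_zero:
  fixes H :: "'a set" and t :: "'a \<Rightarrow> 'a" and phi :: "'a \<Rightarrow> int"
  assumes "finite H" "\<And>h. h \<in> H \<Longrightarrow> t h \<in> H" "inj_on t H"
    and "\<And>h. h \<in> H \<Longrightarrow> chi (phi (t h)) = chi (phi h) * z" and "z \<noteq> 1"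
  shows "(\<Sum>h\<in>H. chi (phi h)) = 0"
proof -
  have im: "t ` H = H" using endo_inj_surj[OF assms(1) _ assms(3)] assms(2) by blast
  have "(\<Sum>h\<in>H. chi (phi h)) = (\<Sum>h\<in>t ` H. chi (phi h))" using im by simp
  also have "\<dots> = (\<Sum>h\<in>H. chi (phi (t h)))" using sum.reindex[OF assms(3)] by simp
  also have "\<dots> = (\<Sum>h\<in>H. chi (phi h)) * z" using assms(4) by (simp add: sum_distrib_right)
  finally have "(\<Sum>h\<in>H. chi (phi h)) * (1 - z) = 0" by (simp add: algebra_simps)
  then show ?thesis using assms(5) by simp
qed

definition u2 :: "nat \<Rightarrow> nat \<Rightarrow> nat \<Rightarrow> z2z4vec" where
  "u2 a b i = (map (\<lambda>k. if k = i then 1 else 0) [0..<a], replicate b 0)"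
definition u4 :: "nat \<Rightarrow> nat \<Rightarrow> nat \<Rightarrow> z2z4vec" where
  "u4 a b j = (replicate a 0, map (\<lambda>k. if k = j then 1 else 0) [0..<b])"

lemma u2_space: "u2 a b i \<in> z2z4_space a b" by (auto simp: u2_def space_iff)
lemma u4_space: "u4 a b i \<in> z2z4_space a b" by (auto simp: u4_def space_iff)

lemma sum_delta_mult:
  fixes f :: "nat \<Rightarrow> int"
  shows "(\<Sum>k<n. c * (f k * (if k = i then 1 else 0))) = (if i < n then c * f i else 0)"
proof -
  have "(\<Sum>k<n. c * (f k * (if k = i then 1 else 0))) = (\<Sum>k<n. if k = i then c * f k else 0)"
    by (rule sum.cong) auto
  also have "\<dots> = (if i < n then c * f i else 0)" by (simp add: sum.delta)
  finally show ?thesis .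
qed

lemma inner_u2: "x \<in> z2z4_space a b \<Longrightarrow> i < a \<Longrightarrow> z2z4_inner x (u2 a b i) = (2 * fst x ! i) mod 4"
  by (simp add: inner_space u2_def sum_delta_mult[where c=2, simplified])

lemma inner_u4: "x \<in> z2z4_space a b \<Longrightarrow> j < b \<Longrightarrow> z2z4_inner x (u4 a b j) = snd x ! j mod 4"
  using sum_delta_mult[where c=1 and f="\<lambda>k. snd x ! k" and n=b and i=j]
  by (simp add: inner_space u4_def)

lemma witness:
  assumes "x \<in> z2z4_space a b" "x \<noteq> z2z4_zero a b"
  shows "\<exists>h\<in>z2z4_space a b. z2z4_inner x h \<noteq> 0"
proof (rule ccontr)
  assume c: "\<not> ?thesis"
  have "x = z2z4_zero a b"
  proof (rule space_eqI[OF assms(1) zero_space(1)])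
    fix i assume i: "i < a"
    have "fst x ! i \<in> {0,1}" using assms i by (auto simp: space_iff)
    moreover have "(2 * fst x ! i) mod 4 = 0" using c inner_u2[OF assms(1) i] u2_space by metis
    ultimately show "fst x ! i = fst (z2z4_zero a b) ! i" using zero_space(2)[OF i] by auto
  next
    fix j assume j: "j < b"
    have "snd x ! j \<in> {0,1,2,3}" using assms j by (auto simp: space_iff)
    moreover have "snd x ! j mod 4 = 0" using c inner_u4[OF assms(1) j] u4_space by metis
    ultimately show "snd x ! j = snd (z2z4_zero a b) ! j" using zero_space(3)[OF j] by auto
  qed
  then show False using assms(2) by simp
qed

lemma dual_card:
  assumes add: "z2z4_additive a b C"
  shows "card (z2z4_space a b) = card C * card (z2z4_dual a b C)"
proof -
  let ?G = "z2z4_space a b" and ?D = "z2z4_dual a b C" and ?z = "z2z4_zero a b"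
  have CG: "C \<subseteq> ?G" and z: "?z \<in> C" and cl: "\<And>x y. x \<in> C \<Longrightarrow> y \<in> C \<Longrightarrow> z2z4_add x y \<in> C"
    using add by (auto simp: z2z4_additive_def)
  have fG: "finite ?G" by (rule finite_space)
  have fC: "finite C" using finite_subset[OF CG fG] .
  have DG: "?D \<subseteq> ?G" by (auto simp: z2z4_dual_def)
  have inner_c: "(\<Sum>w\<in>?G. chi (z2z4_inner c w)) = (if c = ?z then of_nat (card ?G) else 0)" if c: "c \<in> C" for c
  proof (cases "c = ?z")
    case True then show ?thesis by (simp add: inner_zero_left chi_def)
  next
    case False
    have cG: "c \<in> ?G" using c CG by auto
    obtain h0 where h0: "h0 \<in> ?G" "z2z4_inner c h0 \<noteq> 0" using witness[OF cG False] by blast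
    have "(\<Sum>w\<in>?G. chi (z2z4_inner c w)) = 0"
    proof (rule char_sum_zero[where t="\<lambda>w. z2z4_add w h0" and z="chi (z2z4_inner c h0)"])
      show "finite ?G" by (rule fG)
      show "\<And>h. h \<in> ?G \<Longrightarrow> z2z4_add h h0 \<in> ?G" using add_space(1) h0 by blast
      show "inj_on (\<lambda>w. z2z4_add w h0) ?G" using add_cancel h0(1) by (meson inj_onI)
      show "chi (z2z4_inner c (z2z4_add h h0)) = chi (z2z4_inner c h) * chi (z2z4_inner c h0)" if "h \<in> ?G" for h
        using inner_add_right[OF that h0(1) cG] by (simp only: chi_mod chi_add)
      show "chi (z2z4_inner c h0) \<noteq> 1" using h0(2) inner_range(3)[of c h0] by (simp add: chi_one_iff)
    qed
    then show ?thesis using False by simp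
  qed
  have inner_w: "(\<Sum>c\<in>C. chi (z2z4_inner c w)) = (if w \<in> ?D then of_nat (card C) else 0)" if w: "w \<in> ?G" for w
  proof (cases "w \<in> ?D")
    case True then show ?thesis by (simp add: z2z4_dual_def chi_def)
  next
    case False
    then obtain c0 where c0: "c0 \<in> C" "z2z4_inner c0 w \<noteq> 0" using w by (auto simp: z2z4_dual_def)
    have "(\<Sum>c\<in>C. chi (z2z4_inner c w)) = 0"
    proof (rule char_sum_zero[where t="\<lambda>c. z2z4_add c c0" and z="chi (z2z4_inner c0 w)"])
      show "finite C" by (rule fC)
      show "\<And>h. h \<in> C \<Longrightarrow> z2z4_add h c0 \<in> C" using cl c0 by blast
      show "inj_on (\<lambda>c. z2z4_add c c0) C" using add_cancel c0(1) CG by (meson inj_onI subsetD)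
      show "chi (z2z4_inner (z2z4_add h c0) w) = chi (z2z4_inner h w) * chi (z2z4_inner c0 w)" if "h \<in> C" for h
      proof -
        have "z2z4_inner (z2z4_add h c0) w = (z2z4_inner h w + z2z4_inner c0 w) mod 4"
          using inner_add_left[of h a b c0 w] that c0(1) CG w by auto
        then show ?thesis by (simp only: chi_mod chi_add)
      qed
      show "chi (z2z4_inner c0 w) \<noteq> 1" using c0(2) inner_range(3)[of c0 w] by (simp add: chi_one_iff)
    qed
    then show ?thesis using False by simp
  qed
  have "(\<Sum>c\<in>C. \<Sum>w\<in>?G. chi (z2z4_inner c w)) = (\<Sum>c\<in>C. if c = ?z then of_nat (card ?G) else 0)"
    by (rule sum.cong) (simp_all add: inner_c)
  also have "\<dots> = of_nat (card ?G)" using z fC by (simp add: sum.delta)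
  finally have s1: "(\<Sum>c\<in>C. \<Sum>w\<in>?G. chi (z2z4_inner c w)) = of_nat (card ?G)" .
  moreover have "(\<Sum>w\<in>?G. \<Sum>c\<in>C. chi (z2z4_inner c w)) = (\<Sum>w\<in>?G. if w \<in> ?D then of_nat (card C) else 0)"
    by (rule sum.cong) (simp_all add: inner_w)
  moreover have "\<dots> = of_nat (card C) * of_nat (card ?D)"
    using DG fG by (simp add: sum.If_cases Int_absorb1 [OF DG] Int_commute)
  moreover have "(\<Sum>c\<in>C. \<Sum>w\<in>?G. chi (z2z4_inner c w)) = (\<Sum>w\<in>?G. \<Sum>c\<in>C. chi (z2z4_inner c w))"
    by (rule sum.swap)
  ultimately have "(of_nat (card ?G) :: complex) = of_nat (card C * card ?D)" by simp
  then show ?thesis using of_nat_eq_iff by blast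
qed


lemma length_gray[simp]: "length (gray x) = 2" by (simp add: gray_def)

lemma length_concat_gray[simp]: "length (concat (map gray ys)) = 2 * length ys"
  by (induction ys) auto

lemma concat_gray_nth:
  "j < length ys \<Longrightarrow> concat (map gray ys) ! (2*j) = (ys!j \<noteq> 0 \<and> ys!j \<noteq> 1)
     \<and> concat (map gray ys) ! (2*j+1) = (ys!j = 1 \<or> ys!j = 2)"
proof (induction ys arbitrary: j)
  case Nil then show ?case by simp
next
  case (Cons y ys)
  show ?case
  proof (cases j)
    case 0 then show ?thesis by (simp add: gray_def)
  next
    case (Suc j')
    then have "j' < length ys" using Cons by simp
    moreover have "concat (map gray (y # ys)) = gray y @ concat (map gray ys)" by simp
    ultimately show ?thesis using Cons.IH[of j'] Suc by (simp add: nth_append)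
  qed
qed

lemma Gray_length: "v \<in> z2z4_space a b \<Longrightarrow> length (Gray v) = a + 2*b"
  by (simp add: Gray_def space_iff)

lemma Gray_nth:
  assumes "v \<in> z2z4_space a b"
  shows "k < a \<Longrightarrow> Gray v ! k = (fst v ! k = 1)"
    and "j < b \<Longrightarrow> Gray v ! (a + 2*j) = (snd v ! j = 2 \<or> snd v ! j = 3)"
    and "j < b \<Longrightarrow> Gray v ! (a + 2*j + 1) = (snd v ! j = 1 \<or> snd v ! j = 2)"
proof -
  have l: "length (fst v) = a" "length (snd v) = b" using assms by (auto simp: space_iff)
  show "k < a \<Longrightarrow> Gray v ! k = (fst v ! k = 1)" using l by (simp add: Gray_def nth_append)
  assume j: "j < b"
  have r: "snd v ! j \<in> {0,1,2,3}" using assms j by (auto simp: space_iff)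
  show "Gray v ! (a + 2*j) = (snd v ! j = 2 \<or> snd v ! j = 3)"
    using concat_gray_nth[of j "snd v"] l j r by (auto simp: Gray_def nth_append)
  show "Gray v ! (a + 2*j + 1) = (snd v ! j = 1 \<or> snd v ! j = 2)"
    using concat_gray_nth[of j "snd v"] l j r by (auto simp: Gray_def nth_append)
qed

definition GS :: "nat \<Rightarrow> nat \<Rightarrow> z2z4vec \<Rightarrow> nat set" where
  "GS a b v = {k. k < a + 2*b \<and> Gray v ! k}"

lemma GS_sub: "GS a b v \<subseteq> {..<a+2*b}" by (auto simp: GS_def)
lemma GS_finite: "finite (GS a b v)" by (rule finite_subset[OF GS_sub]) simp

lemma split_pos:
  fixes k a b :: nat
  assumes "k < a + 2*b" "\<not> k < a"
  shows "\<exists>j<b. k = a + 2*j \<or> k = a + 2*j + 1"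
proof -
  let ?j = "(k - a) div 2"
  have e: "k - a = 2*?j + (k-a) mod 2" by simp
  have "(k-a) mod 2 = 0 \<or> (k-a) mod 2 = 1" by auto
  then have "k = a + 2 * ?j \<or> k = a + 2 * ?j + 1" using e assms by linarith
  moreover have "?j < b" using assms by linarith
  ultimately show ?thesis by blast
qed

lemma GS_z2: "v \<in> z2z4_space a b \<Longrightarrow> i < a \<Longrightarrow> i \<in> GS a b v \<longleftrightarrow> fst v ! i = 1"
  using Gray_nth(1) by (auto simp: GS_def)
lemma GS_z4a: "v \<in> z2z4_space a b \<Longrightarrow> j < b \<Longrightarrow> a + 2*j \<in> GS a b v \<longleftrightarrow> (snd v ! j = 2 \<or> snd v ! j = 3)"
  using Gray_nth(2) by (auto simp: GS_def)
lemma GS_z4b: "v \<in> z2z4_space a b \<Longrightarrow> j < b \<Longrightarrow> a + 2*j + 1 \<in> GS a b v \<longleftrightarrow> (snd v ! j = 1 \<or> snd v ! j = 2)"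
  using Gray_nth(3) by (auto simp: GS_def)

definition qval :: "bool \<Rightarrow> bool \<Rightarrow> int" where
  "qval x y = (if x then (if y then 2 else 3) else (if y then 1 else 0))"

lemma decode:
  assumes "v \<in> z2z4_space a b"
  shows "i < a \<Longrightarrow> fst v ! i = (if i \<in> GS a b v then 1 else 0)"
    and "j < b \<Longrightarrow> snd v ! j = qval (a + 2*j \<in> GS a b v) (a + 2*j + 1 \<in> GS a b v)"
proof -
  show "i < a \<Longrightarrow> fst v ! i = (if i \<in> GS a b v then 1 else 0)"
    using GS_z2[OF assms] assms by (auto simp: space_iff)
  assume j: "j < b"
  have "snd v ! j \<in> {0,1,2,3}" using assms j by (auto simp: space_iff)
  then show "snd v ! j = qval (a + 2*j \<in> GS a b v) (a + 2*j + 1 \<in> GS a b v)"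
    using GS_z4a[OF assms j] GS_z4b[OF assms j] by (auto simp: qval_def)
qed

lemma GS_zero_iff:
  assumes "v \<in> z2z4_space a b"
  shows "GS a b v = {} \<longleftrightarrow> v = z2z4_zero a b"
proof
  assume e: "GS a b v = {}"
  show "v = z2z4_zero a b"
    by (rule space_eqI[OF assms zero_space(1)]) (simp_all add: decode[OF assms] e qval_def zero_space)
next
  assume vz: "v = z2z4_zero a b"
  show "GS a b v = {}"
  proof (rule ccontr)
    assume "GS a b v \<noteq> {}"
    then obtain k where k: "k \<in> GS a b v" by blast
    have kr: "k < a + 2*b" using k by (simp add: GS_def)
    show False
    proof (cases "k < a")
      case True
      then show False using GS_z2[OF assms True] k vz zero_space(2)[OF True] by simp
    next
      case False
      then obtain j where j: "j < b" "k = a + 2*j \<or> k = a + 2*j + 1" using split_pos[OF kr] by blast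
      then show False using GS_z4a[OF assms j(1)] GS_z4b[OF assms j(1)] k vz zero_space(3)[OF j(1)] by auto
    qed
  qed
qed

definition wordof :: "nat \<Rightarrow> nat set \<Rightarrow> bool list" where
  "wordof n A = map (\<lambda>k. k \<in> A) [0..<n]"

definition TS :: "bool list \<Rightarrow> nat set" where "TS x = {k. k < length x \<and> x ! k}"

lemma wordof_TS: "wordof (length x) (TS x) = x"
  by (rule nth_equalityI) (auto simp: wordof_def TS_def)

lemma TS_wordof: "A \<subseteq> {..<n} \<Longrightarrow> TS (wordof n A) = A"
  by (auto simp: wordof_def TS_def)

lemma hamming_wordof:
  assumes "A \<subseteq> {..<n}" "B \<subseteq> {..<n}"
  shows "hamming (wordof n A) (wordof n B) = card ((A - B) \<union> (B - A))"
proof -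
  have "{i. i < length (wordof n A) \<and> wordof n A ! i \<noteq> wordof n B ! i} = (A - B) \<union> (B - A)"
    using assms by (auto simp: wordof_def)
  then show ?thesis by (simp add: hamming_def)
qed

lemma perfect_unique:
  assumes "perfect1 n W" "x \<in> W" "y \<in> W"
    "hamming (wordof n A) x \<le> 1" "hamming (wordof n A) y \<le> 1"
  shows "x = y"
proof -
  have l: "length (wordof n A) = n" by (simp add: wordof_def)
  have "\<exists>!c. c \<in> W \<and> hamming (wordof n A) c \<le> 1" using assms(1) l unfolding perfect1_def by simp
  then obtain c where "\<And>d. d \<in> W \<and> hamming (wordof n A) d \<le> 1 \<Longrightarrow> d = c" by auto
  then show ?thesis using assms(2-5) by metis
qed

lemma mind_bin:
  assumes pf: "perfect1 n W" and z: "replicate n False \<in> W" and x: "x \<in> W"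
  shows "card (TS x) \<noteq> 1 \<and> card (TS x) \<noteq> 2"
proof -
  have lx: "length x = n" using pf x by (auto simp: perfect1_def)
  have Tx: "TS x \<subseteq> {..<n}" using lx by (auto simp: TS_def)
  have xw: "wordof n (TS x) = x" using wordof_TS[of x] lx by simp
  have zw: "wordof n {} = replicate n False" by (rule nth_equalityI) (auto simp: wordof_def)
  have fin: "finite (TS x)" using Tx finite_subset by blast
  show ?thesis
  proof
    show "card (TS x) \<noteq> 1"
    proof
      assume c1: "card (TS x) = 1"
      have "hamming (wordof n (TS x)) (wordof n (TS x)) \<le> 1" using hamming_wordof[OF Tx Tx] by simp
      then have "hamming (wordof n (TS x)) x \<le> 1" by (simp only: xw)
      moreover have "hamming (wordof n (TS x)) (wordof n {}) \<le> 1"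
        using hamming_wordof[OF Tx, of "{}"] c1 by simp
      then have "hamming (wordof n (TS x)) (replicate n False) \<le> 1" by (simp only: zw)
      ultimately have "x = replicate n False" using perfect_unique[OF pf x z] by blast
      then have "TS x = {}" by (simp add: TS_def)
      then show False using c1 by simp
    qed
    show "card (TS x) \<noteq> 2"
    proof
      assume c2: "card (TS x) = 2"
      then obtain p q where pq: "TS x = {p,q}" "p \<noteq> q" by (meson card_2_iff)
      have P: "{p} \<subseteq> {..<n}" using Tx pq by auto
      have "({p} - {p,q}) \<union> ({p,q} - {p}) = {q}" using pq by auto
      then have "hamming (wordof n {p}) (wordof n (TS x)) \<le> 1" using hamming_wordof[OF P Tx] pq by simp
      then have "hamming (wordof n {p}) x \<le> 1" by (simp only: xw)
      moreover have "hamming (wordof n {p}) (wordof n {}) \<le> 1"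
        using hamming_wordof[OF P, of "{}"] by simp
      then have "hamming (wordof n {p}) (replicate n False) \<le> 1" by (simp only: zw)
      ultimately have "x = replicate n False" using perfect_unique[OF pf x z] by blast
      then have "TS x = {}" by (simp add: TS_def)
      then show False using c2 by simp
    qed
  qed
qed

lemma cover_bin:
  assumes pf: "perfect1 n W" and z: "replicate n False \<in> W"
    and pq: "p < n" "q < n" "p \<noteq> q"
  shows "\<exists>x\<in>W. p \<in> TS x \<and> q \<in> TS x \<and> card (TS x) = 3"
proof -
  have P: "{p,q} \<subseteq> {..<n}" using pq by auto
  have l: "length (wordof n {p,q}) = n" by (simp add: wordof_def)
  obtain x where x: "x \<in> W" "hamming (wordof n {p,q}) x \<le> 1"
    using pf l unfolding perfect1_def by auto
  have lx: "length x = n" using pf x by (auto simp: perfect1_def)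
  have Tx: "TS x \<subseteq> {..<n}" using lx by (auto simp: TS_def)
  have xw: "wordof n (TS x) = x" using wordof_TS[of x] lx by simp
  have fin: "finite (TS x)" using Tx finite_subset by blast
  have h: "card (({p,q} - TS x) \<union> (TS x - {p,q})) \<le> 1"
    using x(2) hamming_wordof[OF P Tx] by (simp only: xw)
  have c12: "card (TS x) \<noteq> 1 \<and> card (TS x) \<noteq> 2" by (rule mind_bin[OF pf z x(1)])
  have sub: "{p,q} - TS x \<subseteq> ({p,q} - TS x) \<union> (TS x - {p,q})" "TS x - {p,q} \<subseteq> ({p,q} - TS x) \<union> (TS x - {p,q})" by auto
  have fu: "finite (({p,q} - TS x) \<union> (TS x - {p,q}))" using fin by auto
  have a1: "card ({p,q} - TS x) \<le> 1" using card_mono[OF fu sub(1)] h by simp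
  have a2: "card (TS x - {p,q}) \<le> 1" using card_mono[OF fu sub(2)] h by simp
  have dis: "({p,q} - TS x) \<inter> (TS x - {p,q}) = {}" by auto
  have cu: "card ({p,q} - TS x) + card (TS x - {p,q}) \<le> 1"
    using h card_Un_disjoint[OF _ _ dis] fin by simp
  have split: "TS x = (TS x \<inter> {p,q}) \<union> (TS x - {p,q})" by auto
  have ctx: "card (TS x) = card (TS x \<inter> {p,q}) + card (TS x - {p,q})"
    by (rule card_Int_Diff[OF fin])
  have "card (TS x \<inter> {p,q}) + card ({p,q} - TS x) = 2"
    using card_Int_Diff[of "{p,q}" "TS x"] pq(3) by (simp add: Int_commute)
  then have "card (TS x) = 3 \<and> card ({p,q} - TS x) = 0"
    using ctx cu c12 by linarith
  then have "{p,q} - TS x = {}" by simp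
  then show ?thesis using x(1) \<open>card (TS x) = 3 \<and> _\<close> by blast
qed


lemma GS_char:
  assumes "v \<in> z2z4_space a b"
  shows "k \<in> GS a b v \<longleftrightarrow> (k < a \<and> fst v ! k = 1) \<or>
     (\<exists>j<b. (k = a+2*j \<and> (snd v ! j = 2 \<or> snd v ! j = 3)) \<or> (k = a+2*j+1 \<and> (snd v ! j = 1 \<or> snd v ! j = 2)))"
proof
  assume k: "k \<in> GS a b v"
  then have kr: "k < a + 2*b" by (simp add: GS_def)
  show "(k < a \<and> fst v ! k = 1) \<or>
     (\<exists>j<b. (k = a+2*j \<and> (snd v ! j = 2 \<or> snd v ! j = 3)) \<or> (k = a+2*j+1 \<and> (snd v ! j = 1 \<or> snd v ! j = 2)))"
  proof (cases "k < a")
    case True then show ?thesis using GS_z2[OF assms True] k by simp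
  next
    case False
    then obtain j where j: "j < b" "k = a + 2*j \<or> k = a + 2*j + 1" using split_pos[OF kr] by blast
    then show ?thesis using GS_z4a[OF assms j(1)] GS_z4b[OF assms j(1)] k by auto
  qed
next
  assume "(k < a \<and> fst v ! k = 1) \<or>
     (\<exists>j<b. (k = a+2*j \<and> (snd v ! j = 2 \<or> snd v ! j = 3)) \<or> (k = a+2*j+1 \<and> (snd v ! j = 1 \<or> snd v ! j = 2)))"
  then show "k \<in> GS a b v" using GS_z2[OF assms] GS_z4a[OF assms] GS_z4b[OF assms] by auto
qed

definition ev2 :: "nat \<Rightarrow> nat \<Rightarrow> nat set \<Rightarrow> z2z4vec" where
  "ev2 a b S = (map (\<lambda>k. if k \<in> S then 1 else 0) [0..<a], replicate b 0)"
definition tw4 :: "nat \<Rightarrow> nat \<Rightarrow> nat \<Rightarrow> z2z4vec" where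
  "tw4 a b j = (replicate a 0, map (\<lambda>k. if k = j then 2 else 0) [0..<b])"

lemma ev2_space: "ev2 a b S \<in> z2z4_space a b" by (auto simp: ev2_def space_iff)
lemma tw4_space: "tw4 a b j \<in> z2z4_space a b" by (auto simp: tw4_def space_iff)

lemma GS_ev2: "S \<subseteq> {..<a} \<Longrightarrow> GS a b (ev2 a b S) = S"
  using GS_char[OF ev2_space, of _ a b S] by (auto simp: ev2_def split: if_splits)

lemma GS_tw4: "j < b \<Longrightarrow> GS a b (tw4 a b j) = {a+2*j, a+2*j+1}"
proof -
  assume j: "j < b"
  have "k \<in> GS a b (tw4 a b j) \<longleftrightarrow> k = a+2*j \<or> k = a+2*j+1" for k
  proof -
    have "k \<in> GS a b (tw4 a b j) \<longleftrightarrow> (\<exists>j'<b. (k = a+2*j' \<and> j' = j) \<or> (k = a+2*j'+1 \<and> j' = j))"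
      unfolding GS_char[OF tw4_space] by (auto simp: tw4_def split: if_splits)
    also have "\<dots> \<longleftrightarrow> k = a+2*j \<or> k = a+2*j+1" using j by auto
    finally show ?thesis .
  qed
  then show ?thesis by auto
qed

lemma inner_ev2:
  assumes "w \<in> z2z4_space a b" "S \<subseteq> {..<a}"
  shows "z2z4_inner w (ev2 a b S) = (2 * (\<Sum>k\<in>S. fst w ! k)) mod 4"
proof -
  have "(\<Sum>i<a. 2 * (fst w ! i * fst (ev2 a b S) ! i)) = (\<Sum>i<a. if i \<in> S then 2 * fst w ! i else 0)"
    by (rule sum.cong) (auto simp: ev2_def)
  also have "\<dots> = (\<Sum>i\<in>{..<a} \<inter> S. 2 * fst w ! i)" by (simp add: sum.inter_restrict)
  also have "{..<a} \<inter> S = S" using assms(2) by auto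
  finally have e: "(\<Sum>i<a. 2 * (fst w ! i * fst (ev2 a b S) ! i)) = 2 * (\<Sum>k\<in>S. fst w ! k)"
    by (simp add: sum_distrib_left)
  have "(\<Sum>j<b. snd w ! j * snd (ev2 a b S) ! j) = 0" by (simp add: ev2_def)
  then show ?thesis using inner_space[OF assms(1), of "ev2 a b S"] e by simp
qed

lemma inner_tw4:
  assumes "w \<in> z2z4_space a b" "j < b"
  shows "z2z4_inner w (tw4 a b j) = (2 * snd w ! j) mod 4"
proof -
  have "(\<Sum>i<a. 2 * (fst w ! i * fst (tw4 a b j) ! i)) = 0" by (simp add: tw4_def)
  moreover have "(\<Sum>k<b. snd w ! k * snd (tw4 a b j) ! k) = (\<Sum>k<b. if k = j then 2 * snd w ! k else 0)"
    by (rule sum.cong) (auto simp: tw4_def)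
  moreover have "\<dots> = 2 * snd w ! j" using assms(2) by (simp add: sum.delta)
  ultimately show ?thesis using inner_space[OF assms(1), of "tw4 a b j"] by simp
qed

locale zc =
  fixes a b :: nat and C :: "z2z4vec set"
  assumes addC: "z2z4_additive a b C" and perf: "perfect1 (a + 2*b) (Gray ` C)"
begin

abbreviation "D \<equiv> z2z4_dual a b C"

lemma C_space: "C \<subseteq> z2z4_space a b" using addC by (simp add: z2z4_additive_def)
lemma zero_C: "z2z4_zero a b \<in> C" using addC by (simp add: z2z4_additive_def)

lemma D_space: "D \<subseteq> z2z4_space a b" by (auto simp: z2z4_dual_def)

lemma D_additive: "z2z4_additive a b D"
  unfolding z2z4_additive_def
proof (intro conjI ballI)
  show "D \<subseteq> z2z4_space a b" by (rule D_space)
  show "z2z4_zero a b \<in> D" using C_space inner_zero_right zero_space(1) by (auto simp: z2z4_dual_def)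
next
  fix x y assume x: "x \<in> D" and y: "y \<in> D"
  have xs: "x \<in> z2z4_space a b" and ys: "y \<in> z2z4_space a b" using x y D_space by auto
  show "z2z4_add x y \<in> D"
    unfolding z2z4_dual_def
  proof (intro CollectI conjI ballI)
    show "z2z4_add x y \<in> z2z4_space a b" using add_space(1)[OF xs ys] .
    fix u assume u: "u \<in> C"
    then have us: "u \<in> z2z4_space a b" using C_space by auto
    have "z2z4_inner u x = 0" "z2z4_inner u y = 0" using x y u by (auto simp: z2z4_dual_def)
    then show "z2z4_inner u (z2z4_add x y) = 0" using inner_add_right[OF xs ys us] by simp
  qed
next
  fix x assume x: "x \<in> D"
  have xs: "x \<in> z2z4_space a b" using x D_space by auto
  show "z2z4_neg x \<in> D"
    unfolding z2z4_dual_def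
  proof (intro CollectI conjI ballI)
    show "z2z4_neg x \<in> z2z4_space a b" using neg_space(1)[OF xs] .
    fix u assume u: "u \<in> C"
    then have us: "u \<in> z2z4_space a b" using C_space by auto
    have "z2z4_inner u x = 0" using x u by (auto simp: z2z4_dual_def)
    moreover have "z2z4_inner u (z2z4_add x (z2z4_neg x)) = 0"
      using add_neg[OF xs] inner_zero_right[OF us] by simp
    ultimately have "z2z4_inner u (z2z4_neg x) mod 4 = 0"
      using inner_add_right[OF xs neg_space(1)[OF xs] us] by simp
    then show "z2z4_inner u (z2z4_neg x) = 0" using inner_range(3)[of u "z2z4_neg x"] by simp
  qed
qed

lemma dual_D: "z2z4_dual a b D = C"
proof -
  have c1: "card (z2z4_space a b) = card C * card D" by (rule dual_card[OF addC])
  have c2: "card (z2z4_space a b) = card D * card (z2z4_dual a b D)" by (rule dual_card[OF D_additive])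
  have "z2z4_zero a b \<in> D" using D_additive by (simp add: z2z4_additive_def)
  moreover have "finite D" by (rule finite_subset[OF D_space finite_space])
  ultimately have "card D > 0" by (metis card_gt_0_iff empty_iff)
  then have cc: "card (z2z4_dual a b D) = card C" using c1 c2 by simp
  have sub: "C \<subseteq> z2z4_dual a b D"
  proof
    fix c assume c: "c \<in> C"
    have cs: "c \<in> z2z4_space a b" using c C_space by auto
    have "\<forall>w\<in>D. z2z4_inner w c = 0"
    proof
      fix w assume w: "w \<in> D"
      then have "z2z4_inner c w = 0" using c by (auto simp: z2z4_dual_def)
      moreover have ws: "w \<in> z2z4_space a b" using w D_space by auto
      ultimately show "z2z4_inner w c = 0" using inner_sym[OF cs ws] by simp
    qed
    then show "c \<in> z2z4_dual a b D" using cs by (simp add: z2z4_dual_def)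
  qed
  have "finite (z2z4_dual a b D)" by (rule finite_subset[OF _ finite_space]) (auto simp: z2z4_dual_def)
  then show ?thesis using card_subset_eq[OF _ sub] cc by simp
qed

lemma TS_Gray: "v \<in> z2z4_space a b \<Longrightarrow> TS (Gray v) = GS a b v"
  by (auto simp: TS_def GS_def Gray_length)

lemma Gray_zero: "Gray (z2z4_zero a b) = replicate (a+2*b) False"
proof -
  have "TS (Gray (z2z4_zero a b)) = {}" using TS_Gray[OF zero_space(1)] GS_zero_iff[OF zero_space(1)] by simp
  then have "wordof (a+2*b) {} = Gray (z2z4_zero a b)"
    using wordof_TS[of "Gray (z2z4_zero a b)"] Gray_length[OF zero_space(1)] by simp
  moreover have "wordof (a+2*b) {} = replicate (a+2*b) False" by (rule nth_equalityI) (auto simp: wordof_def)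
  ultimately show ?thesis by simp
qed

lemma mind_C: "c \<in> C \<Longrightarrow> card (GS a b c) \<noteq> 1 \<and> card (GS a b c) \<noteq> 2"
  using mind_bin[OF perf, of "Gray c"] Gray_zero zero_C TS_Gray C_space by (metis image_eqI subsetD)

lemma cover_C:
  assumes "p < a + 2*b" "q < a + 2*b" "p \<noteq> q"
  shows "\<exists>c\<in>C. p \<in> GS a b c \<and> q \<in> GS a b c \<and> card (GS a b c) = 3"
proof -
  have z: "replicate (a+2*b) False \<in> Gray ` C" using Gray_zero zero_C by (metis image_eqI)
  obtain x where x: "x \<in> Gray ` C" "p \<in> TS x" "q \<in> TS x" "card (TS x) = 3"
    using cover_bin[OF perf z assms] by blast
  then obtain c where c: "c \<in> C" "x = Gray c" by blast
  have cs: "c \<in> z2z4_space a b" using c(1) C_space by auto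
  have "TS x = GS a b c" using TS_Gray[OF cs] c(2) by simp
  then show ?thesis using x c by auto
qed

lemma rel: "c \<in> C \<Longrightarrow> w \<in> D \<Longrightarrow> z2z4_inner c w = 0"
  by (auto simp: z2z4_dual_def)

lemma nd_gen:
  assumes "v \<in> z2z4_space a b" "\<And>w. w \<in> D \<Longrightarrow> z2z4_inner w v = 0"
  shows "card (GS a b v) \<noteq> 1 \<and> card (GS a b v) \<noteq> 2"
proof -
  have "v \<in> z2z4_dual a b D" using assms by (auto simp: z2z4_dual_def)
  then show ?thesis using dual_D mind_C by simp
qed

lemma ND1: assumes i: "i < a" shows "\<exists>w\<in>D. (2 * fst w ! i) mod 4 \<noteq> 0"
proof (rule ccontr)
  assume h: "\<not> ?thesis"
  have S: "{i} \<subseteq> {..<a}" using i by auto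
  have "z2z4_inner w (ev2 a b {i}) = 0" if w: "w \<in> D" for w
  proof -
    have ws: "w \<in> z2z4_space a b" using w D_space by auto
    show ?thesis using inner_ev2[OF ws S] h w by auto
  qed
  then have "card (GS a b (ev2 a b {i})) \<noteq> 1" using nd_gen[OF ev2_space] by blast
  then show False using GS_ev2[OF S] by simp
qed

lemma ND2: assumes i: "i < a" "i' < a" "i \<noteq> i'"
  shows "\<exists>w\<in>D. (2 * (fst w ! i + fst w ! i')) mod 4 \<noteq> 0"
proof (rule ccontr)
  assume h: "\<not> ?thesis"
  have S: "{i,i'} \<subseteq> {..<a}" using i by auto
  have "z2z4_inner w (ev2 a b {i,i'}) = 0" if w: "w \<in> D" for w
  proof -
    have ws: "w \<in> z2z4_space a b" using w D_space by auto
    show ?thesis using inner_ev2[OF ws S] h w i(3) by auto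
  qed
  then have "card (GS a b (ev2 a b {i,i'})) \<noteq> 2" using nd_gen[OF ev2_space] by blast
  then show False using GS_ev2[OF S] i(3) by simp
qed

lemma ND3: assumes j: "j < b" shows "\<exists>w\<in>D. (2 * snd w ! j) mod 4 \<noteq> 0"
proof (rule ccontr)
  assume h: "\<not> ?thesis"
  have "z2z4_inner w (tw4 a b j) = 0" if w: "w \<in> D" for w
  proof -
    have ws: "w \<in> z2z4_space a b" using w D_space by auto
    show ?thesis using inner_tw4[OF ws j] h w by auto
  qed
  then have "card (GS a b (tw4 a b j)) \<noteq> 2" using nd_gen[OF tw4_space] by blast
  then show False using GS_tw4[OF j] by simp
qed

end


lemma sd1: "i < (n::nat) \<Longrightarrow> (\<Sum>k<n. (if k = i then c else 0) * (f k::int)) = c * f i"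
proof -
  assume i: "i < n"
  have "(\<Sum>k<n. (if k = i then c else 0) * f k) = (\<Sum>k<n. if k = i then c * f k else 0)"
    by (rule sum.cong) auto
  also have "\<dots> = (if i \<in> {..<n} then c * f i else 0)" by (rule sum.delta[OF finite_lessThan])
  finally show ?thesis using i by simp
qed

lemma sd2: "i < (n::nat) \<Longrightarrow> j < n \<Longrightarrow> i \<noteq> j \<Longrightarrow>
   (\<Sum>k<n. (if k = i then c else if k = j then d else 0) * (f k::int)) = c * f i + d * f j"
proof -
  assume h: "i < n" "j < n" "i \<noteq> j"
  have "(\<Sum>k<n. (if k = i then c else if k = j then d else 0) * f k) =
        (\<Sum>k<n. (if k = i then c * f k else 0) + (if k = j then d * f k else 0))"
    by (rule sum.cong) (use h in auto)
  also have "\<dots> = (\<Sum>k<n. if k = i then c * f k else 0) + (\<Sum>k<n. if k = j then d * f k else 0)"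
    by (rule sum.distrib)
  also have "\<dots> = c * f i + d * f j"
    unfolding sum.delta[OF finite_lessThan] using h by simp
  finally show ?thesis .
qed

lemma sd3: "i < (n::nat) \<Longrightarrow> j < n \<Longrightarrow> l < n \<Longrightarrow> i \<noteq> j \<Longrightarrow> i \<noteq> l \<Longrightarrow> j \<noteq> l \<Longrightarrow>
   (\<Sum>k<n. (if k = i then c else if k = j then d else if k = l then e else 0) * (f k::int)) = c * f i + d * f j + e * f l"
proof -
  assume h: "i < n" "j < n" "l < n" "i \<noteq> j" "i \<noteq> l" "j \<noteq> l"
  have "(\<Sum>k<n. (if k = i then c else if k = j then d else if k = l then e else 0) * f k) =
        (\<Sum>k<n. (if k = i then c * f k else 0) + (if k = j then d * f k else 0) + (if k = l then e * f k else 0))"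
    by (rule sum.cong) (use h in auto)
  also have "\<dots> = (\<Sum>k<n. if k = i then c * f k else 0) + (\<Sum>k<n. if k = j then d * f k else 0) + (\<Sum>k<n. if k = l then e * f k else 0)"
    by (simp add: sum.distrib)
  also have "\<dots> = c * f i + d * f j + e * f l"
    unfolding sum.delta[OF finite_lessThan] using h by simp
  finally show ?thesis .
qed

lemma par1[simp]: "((a::nat) + 2*k = a + 2*j + 1) = False" by presburger
lemma par2[simp]: "((a::nat) + 2*k + 1 = a + 2*j) = False" by presburger

lemma three_eq:
  assumes "finite S" "card S = 3" "p \<in> S" "q \<in> S" "p \<noteq> q"
  obtains s where "s \<in> S" "s \<noteq> p" "s \<noteq> q" "S = {p,q,s}"
proof -
  have "S - {p,q} \<noteq> {}"
  proof
    assume "S - {p,q} = {}"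
    then have "S \<subseteq> {p,q}" by auto
    moreover have "card {p,q} \<le> 2" by (simp add: card_insert_if)
    ultimately have "card S \<le> 2" using card_mono[of "{p,q}" S] by simp
    then show False using assms(2) by simp
  qed
  then obtain s where s: "s \<in> S" "s \<noteq> p" "s \<noteq> q" by blast
  have sub: "{p,q,s} \<subseteq> S" using s assms by auto
  have "card {p,q,s} = 3" using s assms(5) by simp
  then have "{p,q,s} = S" using card_subset_eq[OF assms(1) sub] assms(2) by simp
  then show ?thesis using that s by blast
qed

context zc begin

lemma relF:
  assumes "c \<in> C" "w \<in> D" "\<And>i. i < a \<Longrightarrow> fst c ! i = F i" "\<And>k. k < b \<Longrightarrow> snd c ! k = G k"
  shows "(2 * (\<Sum>i<a. F i * fst w ! i) + (\<Sum>k<b. G k * snd w ! k)) mod 4 = 0"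
proof -
  have cs: "c \<in> z2z4_space a b" using assms(1) C_space by auto
  have "z2z4_inner c w = 0" by (rule rel[OF assms(1,2)])
  moreover have "(\<Sum>i<a. 2 * (fst c ! i * fst w ! i)) = 2 * (\<Sum>i<a. F i * fst w ! i)"
    by (simp add: sum_distrib_left assms(3))
  moreover have "(\<Sum>k<b. snd c ! k * snd w ! k) = (\<Sum>k<b. G k * snd w ! k)"
    by (simp add: assms(4))
  ultimately show ?thesis using inner_space[OF cs, of w] by simp
qed

lemma w_space: "w \<in> D \<Longrightarrow> w \<in> z2z4_space a b" using D_space by auto

lemma w_range: "w \<in> D \<Longrightarrow> i < a \<Longrightarrow> fst w ! i \<in> {0,1}" "w \<in> D \<Longrightarrow> k < b \<Longrightarrow> snd w ! k \<in> {0,1,2,3}"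
  using w_space by (auto simp: space_iff)

lemma cover3:
  assumes "p < a + 2*b" "q < a + 2*b" "p \<noteq> q"
  obtains c s where "c \<in> C" "s < a + 2*b" "s \<noteq> p" "s \<noteq> q" "GS a b c = {p,q,s}"
proof -
  obtain c where c: "c \<in> C" "p \<in> GS a b c" "q \<in> GS a b c" "card (GS a b c) = 3"
    using cover_C[OF assms] by blast
  obtain s where s: "s \<in> GS a b c" "s \<noteq> p" "s \<noteq> q" "GS a b c = {p,q,s}"
    using three_eq[OF GS_finite c(4) c(2) c(3) assms(3)] by blast
  have "s < a + 2*b" using s(1) GS_sub[of a b c] by auto
  then show ?thesis using that c s by blast
qed

lemma Rel1:
  assumes j: "j < b"
  shows "\<exists>f<a. \<forall>w\<in>D. (2 * fst w ! f + 2 * snd w ! j) mod 4 = 0"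
proof -
  let ?p = "a + 2*j" and ?q = "a + 2*j + 1"
  obtain c s where c: "c \<in> C" "s < a + 2*b" "s \<noteq> ?p" "s \<noteq> ?q" "GS a b c = {?p,?q,s}"
    using cover3[of ?p ?q] j by auto
  have cs: "c \<in> z2z4_space a b" using c(1) C_space by auto
  show ?thesis
  proof (cases "s < a")
    case True
    have F: "fst c ! i = (if i = s then 1 else 0)" if "i < a" for i
    proof -
      have "i \<in> GS a b c \<longleftrightarrow> i = s" using c(5) that by auto
      then show ?thesis using decode(1)[OF cs that] by simp
    qed
    have G: "snd c ! k = (if k = j then 2 else 0)" if "k < b" for k
      using decode(2)[OF cs that] c(5) True by (auto simp: qval_def)
    have "\<forall>w\<in>D. (2 * fst w ! s + 2 * snd w ! j) mod 4 = 0"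
    proof
      fix w assume w: "w \<in> D"
      show "(2 * fst w ! s + 2 * snd w ! j) mod 4 = 0"
        using relF[OF c(1) w F G] sd1[OF True, of 1 "\<lambda>i. fst w ! i"] sd1[OF j, of 2 "\<lambda>i. snd w ! i"] by simp
    qed
    then show ?thesis using True by blast
  next
    case False
    then obtain j' where j': "j' < b" "s = a + 2*j' \<or> s = a + 2*j' + 1" using split_pos[OF c(2)] by blast
    have jj: "j' \<noteq> j" using j' c(3,4) by auto
    define e :: int where "e = (if s = a + 2*j' then 3 else 1)"
    have F: "fst c ! i = 0" if "i < a" for i
      using decode(1)[OF cs that] c(5) that False by auto
    have G: "snd c ! k = (if k = j then 2 else if k = j' then e else 0)" if "k < b" for k
      using decode(2)[OF cs that] c(5) j'(2) jj by (auto simp: qval_def e_def)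
    have "\<forall>w\<in>D. (2 * snd w ! j') mod 4 = 0"
    proof
      fix w assume w: "w \<in> D"
      have "(2 * (\<Sum>i<a. 0 * fst w ! i) + (2 * snd w ! j + e * snd w ! j')) mod 4 = 0"
        using relF[OF c(1) w F G] sd2[OF j j'(1) jj[symmetric], of 2 e "\<lambda>i. snd w ! i"] by simp
      then have "(2 * snd w ! j + e * snd w ! j') mod 4 = 0" by simp
      moreover have "e = 1 \<or> e = 3" by (simp add: e_def)
      ultimately show "(2 * snd w ! j') mod 4 = 0" by (elim disjE) presburger+
    qed
    then show ?thesis using ND3[OF j'(1)] by blast
  qed
qed

lemma Rel3:
  assumes i: "i < a" "i' < a" "i \<noteq> i'"
  shows "\<exists>v<a. v \<noteq> i \<and> v \<noteq> i' \<and> (\<forall>w\<in>D. (2 * (fst w ! i + fst w ! i' + fst w ! v)) mod 4 = 0)"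
proof -
  obtain c s where c: "c \<in> C" "s < a + 2*b" "s \<noteq> i" "s \<noteq> i'" "GS a b c = {i,i',s}"
    using cover3[of i i'] i by auto
  have cs: "c \<in> z2z4_space a b" using c(1) C_space by auto
  show ?thesis
  proof (cases "s < a")
    case True
    have F: "fst c ! k = (if k = i then 1 else if k = i' then 1 else if k = s then 1 else 0)" if "k < a" for k
    proof -
      have "k \<in> GS a b c \<longleftrightarrow> k = i \<or> k = i' \<or> k = s" using c(5) by auto
      then show ?thesis using decode(1)[OF cs that] by auto
    qed
    have G: "snd c ! k = 0" if "k < b" for k
      using decode(2)[OF cs that] c(5) True i by (auto simp: qval_def)
    have "\<forall>w\<in>D. (2 * (fst w ! i + fst w ! i' + fst w ! s)) mod 4 = 0"
    proof
      fix w assume w: "w \<in> D"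
      show "(2 * (fst w ! i + fst w ! i' + fst w ! s)) mod 4 = 0"
        using relF[OF c(1) w F G] sd3[OF i(1,2) True i(3) c(3)[symmetric] c(4)[symmetric], of 1 1 1 "\<lambda>k. fst w ! k"] by simp
    qed
    then show ?thesis using True c(3,4) by blast
  next
    case False
    then obtain j' where j': "j' < b" "s = a + 2*j' \<or> s = a + 2*j' + 1" using split_pos[OF c(2)] by blast
    define e :: int where "e = (if s = a + 2*j' then 3 else 1)"
    have F: "fst c ! k = (if k = i then 1 else if k = i' then 1 else 0)" if "k < a" for k
    proof -
      have "k \<in> GS a b c \<longleftrightarrow> k = i \<or> k = i'" using c(5) that False by auto
      then show ?thesis using decode(1)[OF cs that] by auto
    qed
    have G: "snd c ! k = (if k = j' then e else 0)" if "k < b" for k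
      using decode(2)[OF cs that] c(5) j'(2) i by (auto simp: qval_def e_def)
    have "\<forall>w\<in>D. (2 * snd w ! j') mod 4 = 0"
    proof
      fix w assume w: "w \<in> D"
      have "(2 * (fst w ! i + fst w ! i') + e * snd w ! j') mod 4 = 0"
        using relF[OF c(1) w F G] sd2[OF i, of 1 1 "\<lambda>k. fst w ! k"] sd1[OF j'(1), of e "\<lambda>k. snd w ! k"] by simp
      moreover have "e = 1 \<or> e = 3" by (simp add: e_def)
      ultimately show "(2 * snd w ! j') mod 4 = 0" by (elim disjE) presburger+
    qed
    then show ?thesis using ND3[OF j'(1)] by blast
  qed
qed

end


lemma par3[simp]: "(Suc (2 * k) = 2 * (j::nat)) = False" by presburger
lemma par4[simp]: "(2 * k = Suc (2 * (j::nat))) = False" by presburger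

lemma rshift_length[simp]: "length (rshift xs) = length xs"
  by (cases xs) (auto simp: rshift_def)

lemma rshift_nth:
  assumes "i < length xs"
  shows "rshift xs ! i = xs ! ((i + (length xs - 1)) mod length xs)"
proof -
  have ne: "xs \<noteq> []" using assms by auto
  show ?thesis
  proof (cases i)
    case 0
    then show ?thesis using ne by (simp add: rshift_def last_conv_nth)
  next
    case (Suc i')
    have "(i + (length xs - 1)) mod length xs = i'"
    proof -
      have "i + (length xs - 1) = i' + length xs" using Suc ne by (cases xs) auto
      then show ?thesis using Suc assms by simp
    qed
    moreover have "rshift xs ! i = butlast xs ! i'" using ne Suc by (simp add: rshift_def)
    moreover have "butlast xs ! i' = xs ! i'" using Suc assms by (simp add: nth_butlast)
    ultimately show ?thesis by simp
  qed
qed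

lemma rshift_pow_length[simp]: "length ((rshift ^^ m) xs) = length xs"
  by (induction m) auto

lemma rshift_pow_nth:
  assumes "i < length xs"
  shows "(rshift ^^ m) xs ! ((i + m) mod length xs) = xs ! i"
proof (induction m)
  case 0 then show ?case using assms by simp
next
  case (Suc m)
  let ?L = "length xs"
  have L: "?L \<ge> 1" using assms by simp
  have L0: "0 < ?L" using assms by linarith
  have idx: "(i + Suc m) mod ?L < length ((rshift ^^ m) xs)" using L0 by simp
  have "(rshift ^^ Suc m) xs ! ((i + Suc m) mod ?L) = rshift ((rshift ^^ m) xs) ! ((i + Suc m) mod ?L)" by simp
  also have "\<dots> = (rshift ^^ m) xs ! (((i + Suc m) mod ?L + (?L - 1)) mod ?L)"
    using rshift_nth[OF idx] by simp
  also have "((i + Suc m) mod ?L + (?L - 1)) mod ?L = (i + m) mod ?L"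
  proof -
    have "((i + Suc m) mod ?L + (?L - 1)) mod ?L = (i + Suc m + (?L - 1)) mod ?L" by (simp add: mod_add_left_eq)
    also have "i + Suc m + (?L - 1) = (i + m) + ?L" using L by simp
    finally show ?thesis by simp
  qed
  finally show ?case using Suc.IH by simp
qed

lemma sigma_pow: "(z2z4_sigma ^^ m) w = ((rshift ^^ m) (fst w), (rshift ^^ m) (snd w))"
  by (induction m) (auto simp: z2z4_sigma_def)

locale zcc = zc +
  fixes K :: nat
  assumes cyc: "z2z4_cyclic D" and bK: "b = K * a" and a2: "2 \<le> a" and K2: "2 \<le> K"
begin

lemma sig_D: "w \<in> D \<Longrightarrow> (z2z4_sigma ^^ m) w \<in> D"
proof (induction m)
  case 0 then show ?case by simp
next
  case (Suc m)
  have "(z2z4_sigma ^^ Suc m) w = z2z4_sigma ((z2z4_sigma ^^ m) w)" by simp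
  moreover have "\<forall>x\<in>D. z2z4_sigma x \<in> D" using cyc unfolding z2z4_cyclic_def .
  ultimately show ?case using Suc by simp
qed

lemma a_le_b: "a \<le> b"
proof -
  have "1 * a \<le> K * a" using K2 by (intro mult_right_mono) auto
  then show ?thesis using bK by simp
qed

lemma shift_back:
  assumes w: "w \<in> D" and t: "t \<le> b"
  shows "\<exists>w'\<in>D. (\<forall>i<a. fst w' ! i = fst w ! ((i + t) mod a)) \<and> (\<forall>k<b. snd w' ! k = snd w ! ((k + t) mod b))"
proof -
  let ?w' = "(z2z4_sigma ^^ (b - t)) w"
  have ws: "w \<in> z2z4_space a b" using w w_space by auto
  have la: "length (fst w) = a" and lb: "length (snd w) = b" using ws by (auto simp: space_iff)
  have "\<forall>i<a. fst ?w' ! i = fst w ! ((i + t) mod a)"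
  proof (intro allI impI)
    fix i assume i: "i < a"
    let ?i' = "(i + t) mod a"
    have i': "?i' < length (fst w)" using la i by simp
    have "(?i' + (b - t)) mod a = i"
    proof -
      have "(?i' + (b - t)) mod a = (i + t + (b - t)) mod a" by (simp add: mod_add_left_eq)
      also have "i + t + (b - t) = i + K * a" using t bK by simp
      finally show ?thesis using i by simp
    qed
    then show "fst ?w' ! i = fst w ! ?i'" using rshift_pow_nth[OF i', of "b - t"] la by (simp add: sigma_pow)
  qed
  moreover have "\<forall>k<b. snd ?w' ! k = snd w ! ((k + t) mod b)"
  proof (intro allI impI)
    fix k assume k: "k < b"
    let ?k' = "(k + t) mod b"
    have k': "?k' < length (snd w)" using lb k by simp
    have "(?k' + (b - t)) mod b = k"
    proof -
      have "(?k' + (b - t)) mod b = (k + t + (b - t)) mod b" by (simp add: mod_add_left_eq)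
      also have "k + t + (b - t) = k + b" using t by simp
      finally show ?thesis using k by simp
    qed
    then show "snd ?w' ! k = snd w ! ?k'" using rshift_pow_nth[OF k', of "b - t"] lb by (simp add: sigma_pow)
  qed
  ultimately show ?thesis using sig_D[OF w] by blast
qed

lemma Rel2:
  assumes j: "j + a < b"
  shows "\<exists>g<a. \<forall>w\<in>D. (2 * fst w ! g + 3 * snd w ! j + 3 * snd w ! (j + a)) mod 4 = 0"
proof -
  have jb: "j < b" using j by simp
  obtain f where f: "f < a" "\<forall>w\<in>D. (2 * fst w ! f + 2 * snd w ! j) mod 4 = 0" using Rel1[OF jb] by blast
  have f': "\<forall>w\<in>D. (2 * fst w ! f + 2 * snd w ! (j + a)) mod 4 = 0"
  proof
    fix w assume w: "w \<in> D"
    obtain w' where w': "w' \<in> D" "\<forall>i<a. fst w' ! i = fst w ! ((i + a) mod a)" "\<forall>k<b. snd w' ! k = snd w ! ((k + a) mod b)"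
      using shift_back[OF w a_le_b] by blast
    have "fst w' ! f = fst w ! f" using w'(2) f(1) by simp
    moreover have "snd w' ! j = snd w ! (j + a)" using w'(3) jb j by simp
    ultimately show "(2 * fst w ! f + 2 * snd w ! (j + a)) mod 4 = 0" using f(2) w'(1) by metis
  qed
  define J where "J = j + a"
  have jab: "J < b" using j J_def by simp
  have ja: "j \<noteq> J" using a2 J_def by simp
  have f'': "\<forall>w\<in>D. (2 * fst w ! f + 2 * snd w ! J) mod 4 = 0" using f' J_def by simp
  have h1: "a + 2*j < a + 2*b" "a + 2*J < a + 2*b" "a + 2*j \<noteq> a + 2*J" using jb jab ja by auto
  obtain c s where c: "c \<in> C" "s < a + 2*b" "s \<noteq> a + 2*j" "s \<noteq> a + 2*J" "GS a b c = {a + 2*j, a + 2*J, s}"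
    using cover3[OF h1] by blast
  have cs: "c \<in> z2z4_space a b" using c(1) C_space by auto
  show ?thesis
  proof (cases "s < a")
    case True
    have F: "fst c ! i = (if i = s then 1 else 0)" if "i < a" for i
    proof -
      have "i \<in> GS a b c \<longleftrightarrow> i = s" using c(5) that by auto
      then show ?thesis using decode(1)[OF cs that] by simp
    qed
    have G: "snd c ! k = (if k = j then 3 else if k = J then 3 else 0)" if "k < b" for k
    proof -
      have "a + 2*k \<in> GS a b c \<longleftrightarrow> k = j \<or> k = J" using c(5) True by auto
      moreover have "a + 2*k + 1 \<notin> GS a b c" using c(5) True by auto
      ultimately show ?thesis using decode(2)[OF cs that] ja by (auto simp: qval_def)
    qed
    have "\<forall>w\<in>D. (2 * fst w ! s + 3 * snd w ! j + 3 * snd w ! (J)) mod 4 = 0"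
    proof
      fix w assume w: "w \<in> D"
      show "(2 * fst w ! s + 3 * snd w ! j + 3 * snd w ! (J)) mod 4 = 0"
        using relF[OF c(1) w F G] sd1[OF True, of 1 "\<lambda>i. fst w ! i"] sd2[OF jb jab ja, of 3 3 "\<lambda>i. snd w ! i"]
        by (simp add: add.assoc)
    qed
    then show ?thesis using True unfolding J_def by blast
  next
    case False
    then obtain j' where j': "j' < b" "s = a + 2*j' \<or> s = a + 2*j' + 1" using split_pos[OF c(2)] by blast
    have F: "fst c ! i = 0" if "i < a" for i
      using decode(1)[OF cs that] c(5) that False by auto
    have "\<exists>jj<b. \<forall>w\<in>D. (2 * snd w ! jj) mod 4 = 0"
    proof (cases "j' = j")
      case True
      then have s1: "s = a + 2*j + 1" using j'(2) c(3) by auto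
      have G: "snd c ! k = (if k = j then 2 else if k = J then 3 else 0)" if "k < b" for k
      proof -
        have "a + 2*k \<in> GS a b c \<longleftrightarrow> k = j \<or> k = J" using c(5) s1 by auto
        moreover have "a + 2*k + 1 \<in> GS a b c \<longleftrightarrow> k = j" using c(5) s1 by auto
        ultimately show ?thesis using decode(2)[OF cs that] ja by (auto simp: qval_def)
      qed
      have "\<forall>w\<in>D. (2 * snd w ! (J)) mod 4 = 0"
      proof
        fix w assume w: "w \<in> D"
        have "(2 * (\<Sum>i<a. 0 * fst w ! i) + (2 * snd w ! j + 3 * snd w ! (J))) mod 4 = 0"
          using relF[OF c(1) w F G] sd2[OF jb jab ja, of 2 3 "\<lambda>i. snd w ! i"] by simp
        then show "(2 * snd w ! (J)) mod 4 = 0" by presburger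
      qed
      then show ?thesis using jab by blast
    next
      case jn: False
      show ?thesis
      proof (cases "j' = J")
        case True
        then have s1: "s = a + 2*J + 1" using j'(2) c(4) by auto
        have G: "snd c ! k = (if k = j then 3 else if k = J then 2 else 0)" if "k < b" for k
        proof -
          have "a + 2*k \<in> GS a b c \<longleftrightarrow> k = j \<or> k = J" using c(5) s1 by auto
          moreover have "a + 2*k + 1 \<in> GS a b c \<longleftrightarrow> k = J" using c(5) s1 by auto
          ultimately show ?thesis using decode(2)[OF cs that] ja by (auto simp: qval_def)
        qed
        have "\<forall>w\<in>D. (2 * snd w ! j) mod 4 = 0"
        proof
          fix w assume w: "w \<in> D"
          have "(2 * (\<Sum>i<a. 0 * fst w ! i) + (3 * snd w ! j + 2 * snd w ! (J))) mod 4 = 0"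
            using relF[OF c(1) w F G] sd2[OF jb jab ja, of 3 2 "\<lambda>i. snd w ! i"] by simp
          then show "(2 * snd w ! j) mod 4 = 0" by presburger
        qed
        then show ?thesis using jb by blast
      next
        case jn2: False
        define e :: int where "e = (if s = a + 2*j' then 3 else 1)"
        have ne1: "j \<noteq> j'" and ne2: "J \<noteq> j'" using jn jn2 by auto
        have G: "snd c ! k = (if k = j then 3 else if k = J then 3 else if k = j' then e else 0)" if "k < b" for k
        proof -
          have "a + 2*k \<in> GS a b c \<longleftrightarrow> k = j \<or> k = J \<or> (s = a + 2*j' \<and> k = j')" using c(5) j'(2) by auto
          moreover have "a + 2*k + 1 \<in> GS a b c \<longleftrightarrow> (s = a + 2*j' + 1 \<and> k = j')" using c(5) j'(2) by auto
          ultimately show ?thesis using decode(2)[OF cs that] ja jn jn2 j'(2) by (auto simp: qval_def e_def)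
        qed
        have "\<forall>w\<in>D. (2 * snd w ! j') mod 4 = 0"
        proof
          fix w assume w: "w \<in> D"
          have "(2 * (\<Sum>i<a. 0 * fst w ! i) + (3 * snd w ! j + 3 * snd w ! (J) + e * snd w ! j')) mod 4 = 0"
            using relF[OF c(1) w F G] sd3[OF jb jab j'(1) ja ne1 ne2, of 3 3 e "\<lambda>i. snd w ! i"] by simp
          then have r: "(3 * snd w ! j + 3 * snd w ! (J) + e * snd w ! j') mod 4 = 0" by simp
          have r1: "(2 * fst w ! f + 2 * snd w ! j) mod 4 = 0" using f(2) w by blast
          have r2: "(2 * fst w ! f + 2 * snd w ! (J)) mod 4 = 0" using f'' w by blast
          have "e = 1 \<or> e = 3" by (simp add: e_def)
          then show "(2 * snd w ! j') mod 4 = 0" using r r1 r2 by (elim disjE) presburger+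
        qed
        then show ?thesis using j'(1) by blast
      qed
    qed
    then obtain jj where "jj < b" "\<forall>w\<in>D. (2 * snd w ! jj) mod 4 = 0" by blast
    then show ?thesis using ND3 by blast
  qed
qed

end


context zc begin

lemma sts_card:
  assumes w: "w \<in> D"
  shows "card {i. i < a \<and> fst w ! i = 1} = 0 \<or> 2 * card {i. i < a \<and> fst w ! i = 1} = a + 1"
proof (cases "{i. i < a \<and> fst w ! i = 1} = {}")
  case True then show ?thesis by simp
next
  case False
  define T where "T = {i. i < a \<and> fst w ! i = 1}"
  define U where "U = {i. i < a \<and> fst w ! i = 0}"
  obtain t where t: "t \<in> T" using False T_def by blast
  have ta: "t < a" and xt: "fst w ! t = 1" using t by (auto simp: T_def)
  define third where "third i = (SOME v. v < a \<and> v \<noteq> t \<and> v \<noteq> i \<and> (\<forall>w\<in>D. (2 * (fst w ! t + fst w ! i + fst w ! v)) mod 4 = 0))" for i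
  have th: "third i < a \<and> third i \<noteq> t \<and> third i \<noteq> i \<and> (\<forall>w\<in>D. (2 * (fst w ! t + fst w ! i + fst w ! third i)) mod 4 = 0)"
    if ia: "i < a" and it: "i \<noteq> t" for i
  proof -
    have "\<exists>v. v < a \<and> v \<noteq> t \<and> v \<noteq> i \<and> (\<forall>w\<in>D. (2 * (fst w ! t + fst w ! i + fst w ! v)) mod 4 = 0)"
      using Rel3[OF ta ia it[symmetric]] by blast
    then show ?thesis unfolding third_def by (rule someI_ex)
  qed
  have inj: "inj_on third S" if S: "S \<subseteq> {..<a} - {t}" for S
  proof (rule inj_onI)
    fix u1 u2 assume u: "u1 \<in> S" "u2 \<in> S" "third u1 = third u2"
    have u1: "u1 < a" "u1 \<noteq> t" and u2: "u2 < a" "u2 \<noteq> t" using u S by auto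
    show "u1 = u2"
    proof (rule ccontr)
      assume ne: "u1 \<noteq> u2"
      have "\<forall>w'\<in>D. (2 * (fst w' ! u1 + fst w' ! u2)) mod 4 = 0"
      proof
        fix w' assume w': "w' \<in> D"
        have "(2 * (fst w' ! t + fst w' ! u1 + fst w' ! third u1)) mod 4 = 0"
          using th[OF u1] w' by blast
        moreover have "(2 * (fst w' ! t + fst w' ! u2 + fst w' ! third u1)) mod 4 = 0"
          using th[OF u2] w' u(3) by simp
        ultimately show "(2 * (fst w' ! u1 + fst w' ! u2)) mod 4 = 0" by presburger
      qed
      then show False using ND2[OF u1(1) u2(1) ne] by blast
    qed
  qed
  have xr: "fst w ! i = 0 \<or> fst w ! i = 1" if "i < a" for i using w_range(1)[OF w that] by auto
  have m1: "third ` U \<subseteq> T - {t}"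
  proof
    fix v assume "v \<in> third ` U"
    then obtain u where u: "u \<in> U" "v = third u" by blast
    have ua: "u < a" "u \<noteq> t" "fst w ! u = 0" using u xt by (auto simp: U_def)
    have "(2 * (fst w ! t + fst w ! u + fst w ! v)) mod 4 = 0" using th[OF ua(1,2)] w u(2) by blast
    moreover have "v < a" "v \<noteq> t" using th[OF ua(1,2)] u(2) by auto
    ultimately show "v \<in> T - {t}" using xt ua(3) xr[of v] by (auto simp: T_def)
  qed
  have m2: "third ` (T - {t}) \<subseteq> U"
  proof
    fix v assume "v \<in> third ` (T - {t})"
    then obtain u where u: "u \<in> T - {t}" "v = third u" by blast
    have ua: "u < a" "u \<noteq> t" "fst w ! u = 1" using u by (auto simp: T_def)
    have "(2 * (fst w ! t + fst w ! u + fst w ! v)) mod 4 = 0" using th[OF ua(1,2)] w u(2) by blast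
    moreover have "v < a" using th[OF ua(1,2)] u(2) by auto
    ultimately show "v \<in> U" using xt ua(3) xr[of v] by (auto simp: U_def)
  qed
  have US: "U \<subseteq> {..<a} - {t}" using xt by (auto simp: U_def)
  have TS': "T - {t} \<subseteq> {..<a} - {t}" by (auto simp: T_def)
  have fT: "finite T" by (rule finite_subset[of _ "{..<a}"]) (auto simp: T_def)
  have fU: "finite U" by (rule finite_subset[of _ "{..<a}"]) (auto simp: U_def)
  have c1: "card U \<le> card (T - {t})"
    using card_inj_on_le[OF inj[OF US] m1] fT by simp
  have c2: "card (T - {t}) \<le> card U"
    using card_inj_on_le[OF inj[OF TS'] m2] fU by simp
  have cT: "card (T - {t}) = card T - 1" using t fT by simp
  have "T \<union> U = {..<a}" using xr by (auto simp: T_def U_def)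
  moreover have "T \<inter> U = {}" by (auto simp: T_def U_def)
  ultimately have "card T + card U = a" using card_Un_disjoint[OF fT fU] by simp
  moreover have "card T \<ge> 1" using t fT by (metis One_nat_def Suc_leI card_gt_0_iff empty_iff)
  ultimately have "2 * card T = a + 1" using c1 c2 cT by linarith
  then show ?thesis by (simp add: T_def)
qed

end


lemma mod_lt2: "(x::nat) < 2 * a \<Longrightarrow> x mod a = (if x < a then x else x - a)"
proof (cases "x < a")
  case True then show ?thesis by simp
next
  case False
  assume x: "x < 2 * a"
  then have "x mod a = (x - a) mod a" using False le_mod_geq by simp
  also have "\<dots> = x - a" using x False by simp
  finally show ?thesis using False by simp
qed

lemma mod_shift_inj:
  assumes "(i::nat) < a" "i' < a" "(i + d) mod a = (i' + d) mod a"
  shows "i = i'"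
proof -
  let ?e = "d mod a"
  have e: "?e < a" using assms(1) by simp
  have "(i + ?e) mod a = (i' + ?e) mod a" using assms(3) by (metis mod_add_right_eq)
  moreover have "(i + ?e) mod a = (if i + ?e < a then i + ?e else i + ?e - a)" using mod_lt2[of "i + ?e" a] e assms(1) by simp
  moreover have "(i' + ?e) mod a = (if i' + ?e < a then i' + ?e else i' + ?e - a)" using mod_lt2[of "i' + ?e" a] e assms(2) by simp
  ultimately show ?thesis using assms(1,2) e by (auto split: if_splits)
qed

lemma shift_bij:
  assumes "0 < (a::nat)"
  shows "inj_on (\<lambda>i. (i + d) mod a) {..<a}" "(\<lambda>i. (i + d) mod a) ` {..<a} = {..<a}"
proof -
  show inj: "inj_on (\<lambda>i. (i + d) mod a) {..<a}" by (rule inj_onI) (auto intro: mod_shift_inj)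
  have "(\<lambda>i. (i + d) mod a) ` {..<a} \<subseteq> {..<a}" using assms by auto
  then show "(\<lambda>i. (i + d) mod a) ` {..<a} = {..<a}" using endo_inj_surj[OF finite_lessThan _ inj] by simp
qed

lemma card_count: "card {l. l < (a::nat) \<and> P l} = (\<Sum>l<a. if P l then 1 else 0)"
proof -
  have "(\<Sum>l<a. if P l then 1 else 0) = (\<Sum>l<a. if l \<in> {l. P l} then (\<lambda>_. 1::nat) l else 0)" by simp
  also have "\<dots> = sum (\<lambda>_. 1) ({..<a} \<inter> {l. P l})" by (rule sum.inter_restrict[symmetric]) simp
  also have "{..<a} \<inter> {l. P l} = {l. l < a \<and> P l}" by auto
  finally show ?thesis by simp
qed

lemma local_par:
  fixes p q A B :: int
  assumes "p \<in> {0,1}" "q \<in> {0,1}" "A \<in> {0,1,2,3}" "B \<in> {0,1,2,3}"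
    "(2*p + 2*A) mod 4 = 0" "(2*p + 2*B) mod 4 = 0" "(2*q + 3*A + 3*B) mod 4 = 0"
  shows "even ((if A = 2 then 1 else 0) + (if B = 2 then 1 else 0) + (if p = 0 \<and> q = 1 then 1 else (0::nat)))"
proof -
  have "p = 0 \<or> p = 1" "q = 0 \<or> q = 1" "A = 0 \<or> A = 1 \<or> A = 2 \<or> A = 3" "B = 0 \<or> B = 1 \<or> B = 2 \<or> B = 3"
    using assms(1-4) by auto
  then show ?thesis using assms(5-7) by (elim disjE) simp_all
qed

locale zcc8 = zcc +
  assumes a8: "8 dvd (a + 1)"
begin

lemma Z_even:
  assumes w: "w \<in> D" and f: "f < a" and g: "g < a"
  shows "even (card {l. l < a \<and> fst w ! ((f + l) mod a) = 0 \<and> fst w ! ((g + l) mod a) = 1})"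
proof -
  have a0: "0 < a" using a2 by simp
  define d where "d = g + a - f"
  have db: "d \<le> b"
  proof -
    have "2 * a \<le> K * a" using K2 by (intro mult_right_mono) auto
    moreover have "d \<le> 2 * a" using d_def f g by simp
    ultimately show ?thesis using bK by linarith
  qed
  obtain w2 where w2: "w2 \<in> D" "\<forall>i<a. fst w2 ! i = fst w ! ((i + d) mod a)"
    using shift_back[OF w db] by blast
  define A where "A = {i. i < a \<and> fst w ! i = 1}"
  define B where "B = {i. i < a \<and> fst w2 ! i = 1}"
  define Z where "Z = {l. l < a \<and> fst w ! ((f + l) mod a) = 0 \<and> fst w ! ((g + l) mod a) = 1}"
  have xr: "fst w ! i = 0 \<or> fst w ! i = 1" if "i < a" for i using w_range(1)[OF w that] by auto
  have xr2: "fst w2 ! i = 0 \<or> fst w2 ! i = 1" if "i < a" for i using w_range(1)[OF w2(1) that] by auto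
  have fA: "finite A" "finite B" by (auto simp: A_def B_def)
  have gl: "(g + l) mod a = ((f + l) mod a + d) mod a" for l
  proof -
    have "((f + l) mod a + d) mod a = (f + l + d) mod a" by (simp add: mod_add_left_eq)
    also have "f + l + d = (g + l) + a" using d_def f by simp
    finally show ?thesis by simp
  qed
  have imgZ: "(\<lambda>l. (l + f) mod a) ` Z = B - A"
  proof
    show "(\<lambda>l. (l + f) mod a) ` Z \<subseteq> B - A"
    proof
      fix y assume "y \<in> (\<lambda>l. (l + f) mod a) ` Z"
      then obtain l where l: "l \<in> Z" "y = (l + f) mod a" by blast
      have ya: "y < a" using l(2) a0 by simp
      have "fst w ! y = 0" using l by (simp add: Z_def add.commute)
      moreover have "fst w2 ! y = 1" using l w2(2) ya gl[of l] by (simp add: Z_def add.commute)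
      ultimately show "y \<in> B - A" using ya by (simp add: A_def B_def)
    qed
  next
    show "B - A \<subseteq> (\<lambda>l. (l + f) mod a) ` Z"
    proof
      fix y assume y: "y \<in> B - A"
      then have ya: "y < a" by (simp add: B_def)
      then obtain l where l: "l < a" "y = (l + f) mod a" using shift_bij(2)[OF a0, of f] by blast
      have "fst w ! y = 0" using y ya xr[OF ya] by (simp add: A_def)
      moreover have "fst w2 ! y = 1" using y by (simp add: B_def)
      ultimately have "l \<in> Z" using l w2(2) ya gl[of l] by (simp add: Z_def add.commute)
      then show "y \<in> (\<lambda>l. (l + f) mod a) ` Z" using l(2) by blast
    qed
  qed
  have injZ: "inj_on (\<lambda>l. (l + f) mod a) Z" by (rule inj_on_subset[OF shift_bij(1)[OF a0]]) (auto simp: Z_def)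
  have cZ: "card Z = card (B - A)" using card_image[OF injZ] imgZ by simp
  have imgB: "(\<lambda>i. (i + d) mod a) ` B = A"
  proof
    show "(\<lambda>i. (i + d) mod a) ` B \<subseteq> A" using w2(2) a0 by (auto simp: A_def B_def)
  next
    show "A \<subseteq> (\<lambda>i. (i + d) mod a) ` B"
    proof
      fix y assume y: "y \<in> A"
      then have ya: "y < a" by (simp add: A_def)
      then obtain i where i: "i < a" "y = (i + d) mod a" using shift_bij(2)[OF a0, of d] by blast
      then have "i \<in> B" using y w2(2) by (simp add: A_def B_def)
      then show "y \<in> (\<lambda>i. (i + d) mod a) ` B" using i(2) by blast
    qed
  qed
  have injB: "inj_on (\<lambda>i. (i + d) mod a) B" by (rule inj_on_subset[OF shift_bij(1)[OF a0]]) (auto simp: B_def)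
  have cAB: "card A = card B" using card_image[OF injB] imgB by simp
  define z where "z = z2z4_add w w2"
  have zD: "z \<in> D" using D_additive w w2(1) by (simp add: z2z4_additive_def z_def)
  have ws: "w \<in> z2z4_space a b" "w2 \<in> z2z4_space a b" using w w2(1) w_space by auto
  have pt: "fst z ! i = 1 \<longleftrightarrow> ((fst w ! i = 1) \<noteq> (fst w2 ! i = 1))" if "i < a" for i
  proof -
    have "fst z ! i = (fst w ! i + fst w2 ! i) mod 2" using add_space(2)[OF ws that] by (simp add: z_def)
    then show ?thesis using xr[OF that] xr2[OF that] by (elim disjE) simp_all
  qed
  have Tz: "{i. i < a \<and> fst z ! i = 1} = (A - B) \<union> (B - A)"
    using pt by (auto simp: A_def B_def)
  have c1: "card (A - B) = card A - card (A \<inter> B)" using fA by (simp add: card_Diff_subset_Int Int_commute card_Diff_subset)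
  have "card ((A - B) \<union> (B - A)) = card (A - B) + card (B - A)"
    by (rule card_Un_disjoint) (use fA in auto)
  moreover have "card (A - B) = card (B - A)"
  proof -
    have "card A = card (A \<inter> B) + card (A - B)" by (rule card_Int_Diff[OF fA(1)])
    moreover have "card B = card (B \<inter> A) + card (B - A)" by (rule card_Int_Diff[OF fA(2)])
    ultimately show ?thesis using cAB by (simp add: Int_commute)
  qed
  ultimately have cz: "card {i. i < a \<and> fst z ! i = 1} = 2 * card Z" using Tz cZ by simp
  have "card {i. i < a \<and> fst z ! i = 1} = 0 \<or> 2 * card {i. i < a \<and> fst z ! i = 1} = a + 1"
    by (rule sts_card[OF zD])
  then have "card Z = 0 \<or> 4 * card Z = a + 1" using cz by auto
  then show ?thesis using a8 unfolding Z_def[symmetric] by (auto elim!: dvdE)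
qed

lemma block_step:
  assumes w: "w \<in> D" and k: "Suc k < K"
  shows "even (eta a w k) = even (eta a w (Suc k))"
proof -
  have a0: "0 < a" using a2 by simp
  let ?j = "k * a"
  have ja2: "?j + a + a \<le> b"
  proof -
    have "Suc (Suc k) * a \<le> K * a" using k by (intro mult_right_mono) auto
    then show ?thesis using bK by simp
  qed
  have ja: "?j + a < b" using ja2 a0 by linarith
  have jb: "?j < b" using ja by simp
  obtain f where f: "f < a" "\<forall>w\<in>D. (2 * fst w ! f + 2 * snd w ! ?j) mod 4 = 0" using Rel1[OF jb] by blast
  obtain g where g: "g < a" "\<forall>w\<in>D. (2 * fst w ! g + 3 * snd w ! ?j + 3 * snd w ! (?j + a)) mod 4 = 0"
    using Rel2[OF ja] by blast
  define P where "P l = fst w ! ((f + l) mod a)" for l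
  define Q where "Q l = fst w ! ((g + l) mod a)" for l
  define Y1 where "Y1 l = snd w ! (?j + l)" for l
  define Y2 where "Y2 l = snd w ! (?j + a + l)" for l
  have loc: "even ((if Y1 l = 2 then 1 else 0) + (if Y2 l = 2 then 1 else 0) + (if P l = 0 \<and> Q l = 1 then 1 else (0::nat)))"
    if l: "l < a" for l
  proof -
    have lb: "l \<le> b" "a + l \<le> b" using l ja2 by linarith+
    have ll: "?j + (a + l) < b" "?j + l < b" "?j + a + l < b" using l ja2 by linarith+
    obtain w1 where w1: "w1 \<in> D" "\<forall>i<a. fst w1 ! i = fst w ! ((i + l) mod a)" "\<forall>k'<b. snd w1 ! k' = snd w ! ((k' + l) mod b)"
      using shift_back[OF w lb(1)] by blast
    obtain w3 where w3: "w3 \<in> D" "\<forall>i<a. fst w3 ! i = fst w ! ((i + (a + l)) mod a)" "\<forall>k'<b. snd w3 ! k' = snd w ! ((k' + (a + l)) mod b)"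
      using shift_back[OF w lb(2)] by blast
    have e1: "fst w1 ! f = P l" "fst w1 ! g = Q l" using w1(2) f(1) g(1) by (simp_all add: P_def Q_def)
    have e2: "snd w1 ! ?j = Y1 l" "snd w1 ! (?j + a) = Y2 l" using w1(3) jb ja ll by (simp_all add: Y1_def Y2_def add.assoc)
    have "(f + (a + l)) mod a = ((f + l) + a) mod a" by (simp add: ac_simps)
    also have "\<dots> = (f + l) mod a" by (rule mod_add_self2)
    finally have "(f + (a + l)) mod a = (f + l) mod a" .
    then have e3: "fst w3 ! f = P l" using w3(2) f(1) by (simp add: P_def)
    have e4: "snd w3 ! ?j = Y2 l" using w3(3) jb ll by (simp add: Y2_def add.assoc)
    have r1: "(2 * P l + 2 * Y1 l) mod 4 = 0" using f(2) w1(1) e1 e2 by metis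
    have r2: "(2 * P l + 2 * Y2 l) mod 4 = 0" using f(2) w3(1) e3 e4 by metis
    have r3: "(2 * Q l + 3 * Y1 l + 3 * Y2 l) mod 4 = 0" using g(2) w1(1) e1 e2 by metis
    have ra: "(f + l) mod a < a" "(g + l) mod a < a" using a0 by auto
    have rr: "P l \<in> {0,1}" "Q l \<in> {0,1}" using w_range(1)[OF w ra(1)] w_range(1)[OF w ra(2)] by (simp_all add: P_def Q_def)
    have ry: "?j + l < b" "?j + a + l < b" using ll by auto
    have rr2: "Y1 l \<in> {0,1,2,3}" "Y2 l \<in> {0,1,2,3}" using w_range(2)[OF w ry(1)] w_range(2)[OF w ry(2)] by (simp_all add: Y1_def Y2_def)
    show ?thesis by (rule local_par[OF rr rr2 r1 r2 r3])
  qed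
  have et1: "eta a w k = (\<Sum>l<a. if Y1 l = 2 then 1 else 0)" unfolding eta_def card_count Y1_def ..
  have et2: "eta a w (Suc k) = (\<Sum>l<a. if Y2 l = 2 then 1 else 0)"
  proof -
    show ?thesis unfolding eta_def card_count Y2_def by (simp add: add.commute add.left_commute)
  qed
  have "eta a w k + eta a w (Suc k) + card {l. l < a \<and> P l = 0 \<and> Q l = 1} =
        (\<Sum>l<a. (if Y1 l = 2 then 1 else 0) + (if Y2 l = 2 then 1 else 0) + (if P l = 0 \<and> Q l = 1 then 1 else (0::nat)))"
    unfolding et1 et2 card_count sum.distrib ..
  moreover have "even (\<Sum>l<a. (if Y1 l = 2 then 1 else 0) + (if Y2 l = 2 then 1 else 0) + (if P l = 0 \<and> Q l = 1 then 1 else (0::nat)))"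
    by (rule dvd_sum) (use loc in auto)
  moreover have "even (card {l. l < a \<and> P l = 0 \<and> Q l = 1})"
    using Z_even[OF w f(1) g(1)] by (simp add: P_def Q_def)
  ultimately show ?thesis by presburger
qed

lemma all_blocks:
  assumes w: "w \<in> D"
  shows "\<forall>k<K. even (eta a w k) = even (eta a w 0)"
proof (intro allI impI)
  fix k assume "k < K"
  then show "even (eta a w k) = even (eta a w 0)"
  proof (induction k)
    case 0 then show ?case by simp
  next
    case (Suc k)
    then show ?case using block_step[OF w Suc.prems] by simp
  qed
qed

end


theorem corollary3p9:
  fixes r :: nat and C :: "z2z4vec set" and z :: z2z4vec
  assumes "r > 2"
    and "z2z4_additive (2^r - 1) (2^(r-1) * (2^r - 1)) C"
    and "z2z4_perfect1 (2^r - 1) (2^(r-1) * (2^r - 1)) C"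
    and "z2z4_cyclic (z2z4_dual (2^r - 1) (2^(r-1) * (2^r - 1)) C)"
    and "z \<in> z2z4_dual (2^r - 1) (2^(r-1) * (2^r - 1)) C"
    and "z2z4_order4 (2^r - 1) (2^(r-1) * (2^r - 1)) z"
  shows "\<forall>k < 2^(r-1). \<forall>k' < 2^(r-1).
           even (eta (2^r - 1) z k) \<longleftrightarrow> even (eta (2^r - 1) z k')"
proof -
  have r8: "(8::nat) \<le> 2^r"
  proof -
    have "(2::nat)^3 \<le> 2^r" using assms(1) by (intro power_increasing) auto
    then show ?thesis by simp
  qed
  have K4: "(4::nat) \<le> 2^(r-1)"
  proof -
    have "(2::nat)^2 \<le> 2^(r-1)" using assms(1) by (intro power_increasing) auto
    then show ?thesis by simp
  qed
  have d8: "(8::nat) dvd 2^r"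
  proof -
    have "(2::nat)^3 dvd 2^r" using assms(1) by (intro le_imp_power_dvd) auto
    then show ?thesis by simp
  qed
  interpret zcc8 "2^r - 1" "2^(r-1) * (2^r - 1)" C "2^(r-1)"
  proof unfold_locales
    show "z2z4_additive (2^r - 1) (2^(r-1) * (2^r - 1)) C" by (rule assms(2))
    show "perfect1 (2^r - 1 + 2 * (2^(r-1) * (2^r - 1))) (Gray ` C)"
      using assms(3) by (simp add: z2z4_perfect1_def)
    show "z2z4_cyclic (z2z4_dual (2^r - 1) (2^(r-1) * (2^r - 1)) C)" by (rule assms(4))
    show "2^(r-1) * (2^r - 1) = 2^(r-1) * (2^r - (1::nat))" by simp
    show "2 \<le> (2::nat)^r - 1" using r8 by simp
    show "2 \<le> (2::nat)^(r-1)" using K4 by simp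
    show "8 dvd (2::nat)^r - 1 + 1" using d8 r8 by simp
  qed
  have h: "\<forall>k<2^(r-1). even (eta (2^r - 1) z k) = even (eta (2^r - 1) z 0)"
    by (rule all_blocks[OF assms(5)])
  show ?thesis
  proof (intro allI impI)
    fix k k' :: nat assume k: "k < 2^(r-1)" and k': "k' < 2^(r-1)"
    have e1: "even (eta (2^r - 1) z k) = even (eta (2^r - 1) z 0)" using h k by blast
    have e2: "even (eta (2^r - 1) z k') = even (eta (2^r - 1) z 0)" using h k' by blast
    show "even (eta (2^r - 1) z k) = even (eta (2^r - 1) z k')" by (simp only: e1 e2)
  qed
qed


end
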